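(* Let $\xi=\eta x.\chi$ be a tidy fixpoint formula with $x\in\mathrm{FV}(\chi)$ and $\xi\notin\mathrm{Clos}(\chi)$, and let $\chi'=\chi[x'/x]$ for a fresh variable $x'$. Then $\chi'$ is tidy, and: (1) the map $\phi\mapsto\phi[\xi/x']$ is a bijection from $\mathrm{Clos}(\chi')$ onto $\mathrm{Clos}(\xi)$. For all $\phi,\psi\in\mathrm{Clos}(\chi')$: (2) if $\phi\neq x'$ then ($\phi\rightarrow_C\psi$ iff $\phi[\xi/x']\rightarrow_C\psi[\xi/x']$), and $L_n(\phi)=L_n(\phi[\xi/x'])$; (3) if $x'\in\mathrm{FV}(\phi)$ then ($\phi\trianglelefteq_f\psi$ iff $\phi[\xi/x']\trianglelefteq_f\psi[\xi/x']$); (4) if $\phi,\psi$ are fixpoint formulas then ($\psi\sqsubseteq_C\phi$ iff $\psi[\xi/x']\sqsubseteq_C\phi[\xi/x']$); (5) if $\phi$ is a fixpoint formula then $h^\downarrow(\phi)=h^\downarrow(\phi[\xi/x'])$; (6) if $(\phi_n)_{n\in\omega}$ is an infinite trace through $\mathrm{Clos}(\chi')$, then $(\phi_n)_{n\in\omega}$ and $(\phi_n[\xi/x'])_{n\in\omega}$ have the same winner.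
   Context: Syntax. Formulas of the modal $\mu$-calculus are taken in negation normal form: $\phi ::= \top \mid \bot \mid p \mid \neg p \mid x \mid \phi\land\phi\mid\phi\lor\phi\mid\Diamond\phi\mid\Box\phi\mid\mu x.\phi\mid\nu x.\phi$, where $p$ ranges over proposition letters and $x$ over an infinite supply of variables (which occur only positively). The formulas $\top,\bot,p,\neg p,x$ are atomic. $\mathrm{FV}(\phi)$ and $\mathrm{BV}(\phi)$ are the sets of free and bound variables of $\phi$; $\phi$ is tidy if $\mathrm{FV}(\phi)\cap\mathrm{BV}(\phi)=\varnothing$. A fixpoint formula is one of the form $\eta x.\chi$ with $\eta\in\{\mu,\nu\}$; it has type $\eta$, where $\mu$ counts as odd and $\nu$ as even parity, and $\bar\eta$ denotes the other operator. $\chi[\xi/x]$ is the result of replacing every free occurrence of $x$ in $\chi$ by $\xi$; $\xi$ is free for $x$ in $\chi$ if no free variable of $\xi$ becomes bound in $\chi[\xi/x]$. A variable is fresh if it occurs in none of the formulas under consideration. Traces and closure. The trace relation $\rightarrow_C$: $\phi_0\odot\phi_1\rightarrow_C\phi_i$ for $\odot\in\{\land,\lor\}$, $i\in\{0,1\}$; $\heartsuit\phi\rightarrow_C\phi$ for $\heartsuit\in\{\Diamond,\Box\}$; $\eta x.\phi\rightarrow_C\phi[\eta x.\phi/x]$; atomic formulas have no successors. $\twoheadrightarrow_C$ is the reflexive transitive closure of $\rightarrow_C$, $\mathrm{Clos}(\phi)=\{\psi\mid\phi\twoheadrightarrow_C\psi\}$ (a finite set), and a trace is a finite or infinite sequence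 of formulas with consecutive members related by $\rightarrow_C$. Write $\phi\equiv_C\psi$ iff $\phi\twoheadrightarrow_C\psi$ and $\psi\twoheadrightarrow_C\phi$; its equivalence classes are (closure) clusters, and $C(\phi)$ is the cluster of $\phi$. Natural labelling: $L_n(\phi)=\phi$ for atomic $\phi$, $L_n(\heartsuit\psi)=\heartsuit$, $L_n(\psi_0\odot\psi_1)=\odot$, $L_n(\eta x.\psi)=\epsilon$. Free subformulas. $\phi\trianglelefteq_f\psi$ iff $\psi=\chi[\phi/y]$ for some formula $\chi$ and variable $y$ with $y\in\mathrm{FV}(\chi)$ and $\phi$ free for $y$ in $\chi$. Closure order. For a formula $\psi$, write $\rho\twoheadrightarrow_C^{\psi}\sigma$ iff there is a trace $\rho=\chi_0\rightarrow_C\cdots\rightarrow_C\chi_n=\sigma$ ($n\ge0$) with $\psi\trianglelefteq_f\chi_i$ for all $i\le n$. For fixpoint formulas $\phi,\psi$: $\phi\sqsubseteq_C\psi$ iff $\psi\twoheadrightarrow_C^{\psi}\phi$; $\phi\sqsubset_C\psi$ iff $\phi\sqsubseteq_C\psi$ and $\psi\not\sqsubseteq_C\phi$. Chains. An alternating $\sqsubset_C$-chain of length $n$ is a sequence $\eta_1x_1.\chi_1,\dots,\eta_nx_n.\chi_n$ of tidy fixpoint formulas with $\eta_ix_i.\chi_i\sqsubset_C\eta_{i+1}x_{i+1}.\chi_{i+1}$ and $\eta_{i+1}=\bar\eta_i$ for all $i<n$; it starts at the first and leads up to the last formula. For a tidy fixpoint formula $\xi$, $h^\uparrow(\xi)$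 (resp. $h^\downarrow(\xi)$) is the maximal length of an alternating $\sqsubset_C$-chain starting at (resp. leading up to) $\xi$. For a cluster $C$, $\mathit{cd}(C)$ is the maximal length of an alternating $\sqsubset_C$-chain inside $C$. Global priority map. For a tidy fixpoint formula $\psi=\eta y.\phi$ let $d=\mathit{cd}(C(\psi))-h^\uparrow(\psi)$ and set $\Omega_g(\psi)=d$ if $d$ has parity $\eta$ and $\Omega_g(\psi)=d+1$ otherwise; $\Omega_g$ is undefined on non-fixpoint formulas. The winner of an infinite trace of tidy formulas is $\exists$ if the largest value of $\Omega_g$ among the fixpoint formulas occurring infinitely often on it is even, and $\forall$ otherwise. *)

theory Defs
  imports Main
begin

datatype fp = Mu | Nu

datatype 'p fml =
    Top
  | Bot
  | Prop 'p
  | NProp 'p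
  | Var nat
  | And "'p fml" "'p fml"
  | Or "'p fml" "'p fml"
  | Dia "'p fml"
  | Box "'p fml"
  | Fix fp nat "'p fml"

fun dual :: "fp \<Rightarrow> fp" where
  "dual Mu = Nu" | "dual Nu = Mu"

fun FV :: "'p fml \<Rightarrow> nat set" where
  "FV (Var x) = {x}"
| "FV (And a b) = FV a \<union> FV b"
| "FV (Or a b) = FV a \<union> FV b"
| "FV (Dia a) = FV a"
| "FV (Box a) = FV a"
| "FV (Fix e y a) = FV a - {y}"
| "FV _ = {}"

fun BV :: "'p fml \<Rightarrow> nat set" where
  "BV (And a b) = BV a \<union> BV b"
| "BV (Or a b) = BV a \<union> BV b"
| "BV (Dia a) = BV a"
| "BV (Box a) = BV a"
| "BV (Fix e y a) = insert y (BV a)"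
| "BV _ = {}"

definition vars :: "'p fml \<Rightarrow> nat set" where
  "vars a = FV a \<union> BV a"

definition tidy :: "'p fml \<Rightarrow> bool" where
  "tidy a \<longleftrightarrow> FV a \<inter> BV a = {}"

fun is_fix :: "'p fml \<Rightarrow> bool" where
  "is_fix (Fix e y a) = True"
| "is_fix _ = False"

fun fix_type :: "'p fml \<Rightarrow> fp" where
  "fix_type (Fix e y a) = e"
| "fix_type _ = Mu"   \<comment> \<open>irrelevant default, only used on fixpoint formulas\<close>

text \<open>\<open>subst c t x\<close> is \<open>c[t/x]\<close>: replace every free occurrence of x in c by t
(plain replacement, no renaming of bound variables).\<close>
fun subst :: "'p fml \<Rightarrow> 'p fml \<Rightarrow> nat \<Rightarrow> 'p fml" where
  "subst (Var y) t x = (if y = x then t else Var y)"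
| "subst (And a b) t x = And (subst a t x) (subst b t x)"
| "subst (Or a b) t x = Or (subst a t x) (subst b t x)"
| "subst (Dia a) t x = Dia (subst a t x)"
| "subst (Box a) t x = Box (subst a t x)"
| "subst (Fix e y a) t x = (if y = x then Fix e y a else Fix e y (subst a t x))"
| "subst a t x = a"

text \<open>\<open>free_for t x c\<close>: t is free for x in c, i.e. no free variable of t becomes bound
in \<open>c[t/x]\<close>.\<close>
fun free_for :: "'p fml \<Rightarrow> nat \<Rightarrow> 'p fml \<Rightarrow> bool" where
  "free_for t x (And a b) = (free_for t x a \<and> free_for t x b)"
| "free_for t x (Or a b) = (free_for t x a \<and> free_for t x b)"
| "free_for t x (Dia a) = free_for t x a"
| "free_for t x (Box a) = free_for t x a"
| "free_for t x (Fix e y a) =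
     (y = x \<or> ((x \<notin> FV a \<or> y \<notin> FV t) \<and> free_for t x a))"
| "free_for t x _ = True"

inductive step :: "'p fml \<Rightarrow> 'p fml \<Rightarrow> bool" where
  "step (And a b) a"
| "step (And a b) b"
| "step (Or a b) a"
| "step (Or a b) b"
| "step (Dia a) a"
| "step (Box a) a"
| "step (Fix e x a) (subst a (Fix e x a) x)"

definition Clos :: "'p fml \<Rightarrow> 'p fml set" where
  "Clos a = {b. step\<^sup>*\<^sup>* a b}"

definition clos_eq :: "'p fml \<Rightarrow> 'p fml \<Rightarrow> bool" where
  "clos_eq a b \<longleftrightarrow> step\<^sup>*\<^sup>* a b \<and> step\<^sup>*\<^sup>* b a"

definition cluster :: "'p fml \<Rightarrow> 'p fml set" where
  "cluster a = {b. clos_eq a b}"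

definition inf_trace :: "(nat \<Rightarrow> 'p fml) \<Rightarrow> bool" where
  "inf_trace f \<longleftrightarrow> (\<forall>n. step (f n) (f (Suc n)))"

datatype 'p label = LAtom "'p fml" | LAnd | LOr | LDia | LBox | LEps

fun Ln :: "'p fml \<Rightarrow> 'p label" where
  "Ln (And a b) = LAnd"
| "Ln (Or a b) = LOr"
| "Ln (Dia a) = LDia"
| "Ln (Box a) = LBox"
| "Ln (Fix e x a) = LEps"
| "Ln a = LAtom a"

definition fsub :: "'p fml \<Rightarrow> 'p fml \<Rightarrow> bool" where
  "fsub a b \<longleftrightarrow> (\<exists>c y. b = subst c a y \<and> y \<in> FV c \<and> free_for a y c)"

definition trace_within :: "'p fml \<Rightarrow> 'p fml \<Rightarrow> 'p fml \<Rightarrow> bool" where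
  "trace_within p r s \<longleftrightarrow> fsub p r \<and> (\<lambda>a b. step a b \<and> fsub p b)\<^sup>*\<^sup>* r s"

definition sqle :: "'p fml \<Rightarrow> 'p fml \<Rightarrow> bool" where
  "sqle a b \<longleftrightarrow> is_fix a \<and> is_fix b \<and> trace_within b b a"

definition sqlt :: "'p fml \<Rightarrow> 'p fml \<Rightarrow> bool" where
  "sqlt a b \<longleftrightarrow> sqle a b \<and> \<not> sqle b a"

definition alt_chain :: "'p fml list \<Rightarrow> bool" where
  "alt_chain cs \<longleftrightarrow>
     (\<forall>c \<in> set cs. tidy c \<and> is_fix c) \<and>
     (\<forall>i. Suc i < length cs \<longrightarrow>
        sqlt (cs ! i) (cs ! Suc i) \<and> fix_type (cs ! Suc i) = dual (fix_type (cs ! i)))"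

definition h_up :: "'p fml \<Rightarrow> nat" where
  "h_up a = Max {length cs | cs. alt_chain cs \<and> cs \<noteq> [] \<and> hd cs = a}"

definition h_down :: "'p fml \<Rightarrow> nat" where
  "h_down a = Max {length cs | cs. alt_chain cs \<and> cs \<noteq> [] \<and> last cs = a}"

definition cd :: "'p fml set \<Rightarrow> nat" where
  "cd C = Max {length cs | cs. alt_chain cs \<and> set cs \<subseteq> C}"

text \<open>Only meaningful on tidy fixpoint formulas. mu counts as odd, nu as even.\<close>
definition Omega_g :: "'p fml \<Rightarrow> int" where
  "Omega_g a =
     (let d = int (cd (cluster a)) - int (h_up a)
      in if (odd d \<longleftrightarrow> fix_type a = Mu) then d else d + 1)"

datatype player = Eloise | Abelard

definition winner :: "(nat \<Rightarrow> 'p fml) \<Rightarrow> player" where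
  "winner f =
     (if even (Max (Omega_g ` {a. is_fix a \<and> (\<exists>\<^sub>\<infinity>n. f n = a)})) then Eloise else Abelard)"

end

theory Submission
  imports Defs
begin

fun fsize :: "'p fml \<Rightarrow> nat" where
  "fsize (And a b) = Suc (fsize a + fsize b)"
| "fsize (Or a b) = Suc (fsize a + fsize b)"
| "fsize (Dia a) = Suc (fsize a)"
| "fsize (Box a) = Suc (fsize a)"
| "fsize (Fix e y a) = Suc (fsize a)"
| "fsize _ = 1"

lemma fsize_pos: "fsize a > 0"
  by (cases a) auto

lemma subst_nofree: "y \<notin> FV a \<Longrightarrow> subst a t y = a"
  by (induction a) auto

lemma FV_subst_sub: "FV (subst a t y) \<subseteq> (FV a - {y}) \<union> FV t"
  by (induction a) auto

lemma FV_subst_sup: "FV a - {y} \<subseteq> FV (subst a t y)"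
  by (induction a) auto

lemma FV_subst_sup2: "y \<in> FV a \<Longrightarrow> BV a \<inter> FV t = {} \<Longrightarrow> FV t \<subseteq> FV (subst a t y)"
  by (induction a) auto

lemma FV_subst_eq: "BV a \<inter> FV t = {} \<Longrightarrow>
   FV (subst a t y) = (FV a - {y}) \<union> (if y \<in> FV a then FV t else {})"
proof -
  assume h: "BV a \<inter> FV t = {}"
  show ?thesis
  proof (cases "y \<in> FV a")
    case True
    then show ?thesis using FV_subst_sub[of a t y] FV_subst_sup[of a y t] FV_subst_sup2[OF True h] by auto
  next
    case False
    then show ?thesis by (simp add: subst_nofree)
  qed
qed

lemma BV_subst_sub: "BV (subst a t y) \<subseteq> BV a \<union> BV t"
  by (induction a) auto

lemma BV_subst_sup: "BV a \<subseteq> BV (subst a t y)"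
  by (induction a) auto

lemma BV_subst_var: "BV (subst a (Var z) y) = BV a"
  by (induction a) auto

lemma fsize_subst_var: "fsize (subst a (Var z) y) = fsize a"
  by (induction a) auto

lemma finite_FV: "finite (FV a)"
  by (induction a) auto

lemma finite_BV: "finite (BV a)"
  by (induction a) auto

lemma finite_vars: "finite (vars a)"
  by (simp add: vars_def finite_FV finite_BV)

lemma subst_comm:
  "z \<noteq> y \<Longrightarrow> z \<notin> FV S \<Longrightarrow> y \<notin> BV a \<Longrightarrow>
   subst (subst a T z) S y = subst (subst a S y) (subst T S y) z"
  by (induction a) (auto simp: subst_nofree)

lemma step_FV: "step a b \<Longrightarrow> FV b \<subseteq> FV a"
  by (induction rule: step.induct) (use FV_subst_sub in fastforce)+

lemma step_BV: "step a b \<Longrightarrow> BV b \<subseteq> BV a"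
  by (induction rule: step.induct) (use BV_subst_sub in fastforce)+

lemma steps_FV: "step\<^sup>*\<^sup>* a b \<Longrightarrow> FV b \<subseteq> FV a"
  by (induction rule: rtranclp_induct) (auto dest: step_FV)

lemma steps_BV: "step\<^sup>*\<^sup>* a b \<Longrightarrow> BV b \<subseteq> BV a"
  by (induction rule: rtranclp_induct) (auto dest: step_BV)

lemma Clos_trans: "b \<in> Clos a \<Longrightarrow> c \<in> Clos b \<Longrightarrow> c \<in> Clos a"
  by (auto simp: Clos_def)

lemma Clos_refl: "a \<in> Clos a"
  by (auto simp: Clos_def)

lemma Clos_step: "step a b \<Longrightarrow> b \<in> Clos a"
  by (auto simp: Clos_def)

lemma tidy_Clos: "tidy r \<Longrightarrow> t \<in> Clos r \<Longrightarrow> tidy t"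
  using steps_FV steps_BV unfolding tidy_def Clos_def by blast

section \<open>Occurrences\<close>

inductive occn :: "'p fml \<Rightarrow> 'p fml \<Rightarrow> nat \<Rightarrow> bool" where
  orefl: "occn a a 0"
| oandL: "occn a b n \<Longrightarrow> occn a (And b c) (Suc n)"
| oandR: "occn a c n \<Longrightarrow> occn a (And b c) (Suc n)"
| oorL: "occn a b n \<Longrightarrow> occn a (Or b c) (Suc n)"
| oorR: "occn a c n \<Longrightarrow> occn a (Or b c) (Suc n)"
| odia: "occn a b n \<Longrightarrow> occn a (Dia b) (Suc n)"
| obox: "occn a b n \<Longrightarrow> occn a (Box b) (Suc n)"
| ofix: "occn a b n \<Longrightarrow> y \<notin> FV a \<Longrightarrow> occn a (Fix e y b) (Suc n)"

definition occ :: "'p fml \<Rightarrow> 'p fml \<Rightarrow> bool" where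
  "occ a b \<longleftrightarrow> (\<exists>n. occn a b n)"

lemma occ_refl[simp]: "occ a a"
  unfolding occ_def using orefl by blast

lemma occ_And[simp]: "occ a (And b c) \<longleftrightarrow> a = And b c \<or> occ a b \<or> occ a c"
  unfolding occ_def
  by (auto intro: occn.intros elim: occn.cases)

lemma occ_Or[simp]: "occ a (Or b c) \<longleftrightarrow> a = Or b c \<or> occ a b \<or> occ a c"
  unfolding occ_def
  by (auto intro: occn.intros elim: occn.cases)

lemma occ_Dia[simp]: "occ a (Dia b) \<longleftrightarrow> a = Dia b \<or> occ a b"
  unfolding occ_def
  by (auto intro: occn.intros elim: occn.cases)

lemma occ_Box[simp]: "occ a (Box b) \<longleftrightarrow> a = Box b \<or> occ a b"
  unfolding occ_def
  by (auto intro: occn.intros elim: occn.cases)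

lemma occ_Fix[simp]: "occ a (Fix e y b) \<longleftrightarrow> a = Fix e y b \<or> (occ a b \<and> y \<notin> FV a)"
  unfolding occ_def
  by (auto intro: occn.intros elim: occn.cases)

lemma occ_Var[simp]: "occ a (Var y) \<longleftrightarrow> a = Var y"
  unfolding occ_def by (auto intro: occn.intros elim: occn.cases)
lemma occ_Top[simp]: "occ a Top \<longleftrightarrow> a = Top"
  unfolding occ_def by (auto intro: occn.intros elim: occn.cases)
lemma occ_Bot[simp]: "occ a Bot \<longleftrightarrow> a = Bot"
  unfolding occ_def by (auto intro: occn.intros elim: occn.cases)
lemma occ_Prop[simp]: "occ a (Prop p) \<longleftrightarrow> a = Prop p"
  unfolding occ_def by (auto intro: occn.intros elim: occn.cases)
lemma occ_NProp[simp]: "occ a (NProp p) \<longleftrightarrow> a = NProp p"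
  unfolding occ_def by (auto intro: occn.intros elim: occn.cases)

lemma occ_fsize: "occ a b \<Longrightarrow> fsize a \<le> fsize b"
  by (induction b) auto

lemma occ_FV: "occ a b \<Longrightarrow> FV a \<subseteq> FV b"
  by (induction b) auto

lemma occ_BV: "occ a b \<Longrightarrow> BV a \<subseteq> BV b"
  by (induction b) auto

lemma occ_size_eq: "occ a b \<Longrightarrow> fsize a = fsize b \<Longrightarrow> a = b"
  by (induction b) (auto dest: occ_fsize)

lemma occ_antisym: "occ a b \<Longrightarrow> occ b a \<Longrightarrow> a = b"
  using occ_fsize occ_size_eq by (metis le_antisym)

lemma occ_trans: "occ a b \<Longrightarrow> occ b c \<Longrightarrow> occ a c"
  by (induction c) (auto dest: occ_FV)

lemma occ_finite: "finite {a. occ a b}"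
proof (induction b)
  case (And b1 b2)
  have "{a. occ a (And b1 b2)} = insert (And b1 b2) ({a. occ a b1} \<union> {a. occ a b2})" by auto
  then show ?case using And by simp
next
  case (Or b1 b2)
  have "{a. occ a (Or b1 b2)} = insert (Or b1 b2) ({a. occ a b1} \<union> {a. occ a b2})" by auto
  then show ?case using Or by simp
next
  case (Dia b)
  have "{a. occ a (Dia b)} \<subseteq> insert (Dia b) {a. occ a b}" by auto
  then show ?case using Dia finite_subset by blast
next
  case (Box b)
  have "{a. occ a (Box b)} \<subseteq> insert (Box b) {a. occ a b}" by auto
  then show ?case using Box finite_subset by blast
next
  case (Fix e y b)
  have "{a. occ a (Fix e y b)} \<subseteq> insert (Fix e y b) {a. occ a b}" by auto
  then show ?case using Fix finite_subset by blast
qed auto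

lemma occn_subst: "occn a c m \<Longrightarrow> z \<notin> FV a \<Longrightarrow> occn a (subst c T z) m"
  by (induction rule: occn.induct) (auto intro: occn.intros simp: subst_nofree)

lemma Clos_via: "step b c \<Longrightarrow> a \<in> Clos c \<Longrightarrow> a \<in> Clos b"
  using Clos_step Clos_trans by blast

lemma occn_Clos: "occn a b n \<Longrightarrow> a \<in> Clos b"
proof (induction n arbitrary: a b rule: less_induct)
  case (less n)
  from less.prems show ?case
  proof (cases rule: occn.cases)
    case orefl then show ?thesis by (simp add: Clos_refl)
  next
    case (oandL b' m c) then show ?thesis using less.IH[of m a b'] by (auto intro: Clos_via step.intros)
  next
    case (oandR c m b') then show ?thesis using less.IH[of m a c] by (auto intro: Clos_via step.intros)
  next
    case (oorL b' m c) then show ?thesis using less.IH[of m a b'] by (auto intro: Clos_via step.intros)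
  next
    case (oorR c m b') then show ?thesis using less.IH[of m a c] by (auto intro: Clos_via step.intros)
  next
    case (odia b' m) then show ?thesis using less.IH[of m a b'] by (auto intro: Clos_via step.intros)
  next
    case (obox b' m) then show ?thesis using less.IH[of m a b'] by (auto intro: Clos_via step.intros)
  next
    case (ofix b' m y e)
    have "occn a (subst b' (Fix e y b') y) m" using ofix occn_subst by metis
    then have "a \<in> Clos (subst b' (Fix e y b') y)" using less.IH ofix by blast
    then show ?thesis using ofix by (auto intro: Clos_via step.intros)
  qed
qed

lemma occ_Clos: "occ a b \<Longrightarrow> a \<in> Clos b"
  unfolding occ_def using occn_Clos by blast

lemma occ_subst_T: "z \<in> FV d \<Longrightarrow> BV d \<inter> FV T = {} \<Longrightarrow> occ T (subst d T z)"
  by (induction d) auto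

lemma occ_subst_cases: "BV d \<inter> FV T = {} \<Longrightarrow> occ a (subst d T z) \<Longrightarrow> occ a T \<or> occ a d \<or> occ T a"
proof (induction d)
  case (And d1 d2)
  then show ?case using occ_subst_T[of z "And d1 d2" T] subst_nofree[of z "And d1 d2" T]
    by (cases "z \<in> FV (And d1 d2)") auto
next
  case (Or d1 d2)
  then show ?case using occ_subst_T[of z "Or d1 d2" T] subst_nofree[of z "Or d1 d2" T]
    by (cases "z \<in> FV (Or d1 d2)") auto
next
  case (Dia d)
  then show ?case using occ_subst_T[of z "Dia d" T] subst_nofree[of z "Dia d" T]
    by (cases "z \<in> FV (Dia d)") auto
next
  case (Box d)
  then show ?case using occ_subst_T[of z "Box d" T] subst_nofree[of z "Box d" T]
    by (cases "z \<in> FV (Box d)") auto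
next
  case (Fix e w d)
  then show ?case using occ_subst_T[of z "Fix e w d" T] subst_nofree[of z "Fix e w d" T]
    by (cases "z \<in> FV (Fix e w d)"; cases "w = z") auto
qed (auto split: if_splits)

section \<open>Free subformulas as occurrences\<close>

lemma free_for_nofree: "y \<notin> FV d \<Longrightarrow> free_for a y d"
  by (induction d) auto

lemma occ_imp_fsub_aux: "occ a b \<Longrightarrow> y \<notin> vars b \<Longrightarrow> \<exists>c. b = subst c a y \<and> y \<in> FV c \<and> free_for a y c"
proof (induction b)
  case (And b1 b2)
  show ?case
  proof (cases "a = And b1 b2")
    case True then show ?thesis by (intro exI[of _ "Var y"]) simp
  next
    case False
    then have "occ a b1 \<or> occ a b2" using And.prems by auto
    then show ?thesis
    proof
      assume "occ a b1"
      then obtain c where c: "b1 = subst c a y" "y \<in> FV c" "free_for a y c" using And.IH(1) And.prems(2) by (auto simp: vars_def)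
      have "y \<notin> FV b2" using And.prems(2) by (simp add: vars_def)
      then show ?thesis using c free_for_nofree[of y b2 a] by (intro exI[of _ "And c b2"]) (simp add: subst_nofree)
    next
      assume "occ a b2"
      then obtain c where c: "b2 = subst c a y" "y \<in> FV c" "free_for a y c" using And.IH(2) And.prems(2) by (auto simp: vars_def)
      have "y \<notin> FV b1" using And.prems(2) by (simp add: vars_def)
      then show ?thesis using c free_for_nofree[of y b1 a] by (intro exI[of _ "And b1 c"]) (simp add: subst_nofree)
    qed
  qed
next
  case (Or b1 b2)
  show ?case
  proof (cases "a = Or b1 b2")
    case True then show ?thesis by (intro exI[of _ "Var y"]) simp
  next
    case False
    then have "occ a b1 \<or> occ a b2" using Or.prems by auto
    then show ?thesis
    proof
      assume "occ a b1"
      then obtain c where c: "b1 = subst c a y" "y \<in> FV c" "free_for a y c" using Or.IH(1) Or.prems(2) by (auto simp: vars_def)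
      have "y \<notin> FV b2" using Or.prems(2) by (simp add: vars_def)
      then show ?thesis using c free_for_nofree[of y b2 a] by (intro exI[of _ "Or c b2"]) (simp add: subst_nofree)
    next
      assume "occ a b2"
      then obtain c where c: "b2 = subst c a y" "y \<in> FV c" "free_for a y c" using Or.IH(2) Or.prems(2) by (auto simp: vars_def)
      have "y \<notin> FV b1" using Or.prems(2) by (simp add: vars_def)
      then show ?thesis using c free_for_nofree[of y b1 a] by (intro exI[of _ "Or b1 c"]) (simp add: subst_nofree)
    qed
  qed
next
  case (Dia b)
  show ?case
  proof (cases "a = Dia b")
    case True then show ?thesis by (intro exI[of _ "Var y"]) simp
  next
    case False
    then have "occ a b" using Dia.prems(1) by simp
    have yb: "y \<notin> vars b" using Dia.prems(2) by (simp add: vars_def)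
    obtain c where c: "b = subst c a y" "y \<in> FV c" "free_for a y c" using Dia.IH[OF \<open>occ a b\<close> yb] by blast
    then show ?thesis by (intro exI[of _ "Dia c"]) simp
  qed
next
  case (Box b)
  show ?case
  proof (cases "a = Box b")
    case True then show ?thesis by (intro exI[of _ "Var y"]) simp
  next
    case False
    then have "occ a b" using Box.prems(1) by simp
    have yb: "y \<notin> vars b" using Box.prems(2) by (simp add: vars_def)
    obtain c where c: "b = subst c a y" "y \<in> FV c" "free_for a y c" using Box.IH[OF \<open>occ a b\<close> yb] by blast
    then show ?thesis by (intro exI[of _ "Box c"]) simp
  qed
next
  case (Fix e w b)
  show ?case
  proof (cases "a = Fix e w b")
    case True then show ?thesis by (intro exI[of _ "Var y"]) simp
  next
    case False
    then have o: "occ a b" "w \<notin> FV a" using Fix.prems by auto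
    have yb: "y \<notin> vars b" "w \<noteq> y" using Fix.prems(2) by (auto simp: vars_def)
    obtain c where c: "b = subst c a y" "y \<in> FV c" "free_for a y c" using Fix.IH[OF o(1) yb(1)] by blast
    show ?thesis using c o yb(2) by (intro exI[of _ "Fix e w c"]) simp
  qed
next
  case (Var z) then have "a = Var z" by simp
  then show ?case by (intro exI[of _ "Var y"]) simp
next
  case Top then have "a = Top" by simp
  then show ?case by (intro exI[of _ "Var y"]) simp
next
  case Bot then have "a = Bot" by simp
  then show ?case by (intro exI[of _ "Var y"]) simp
next
  case (Prop p) then have "a = Prop p" by simp
  then show ?case by (intro exI[of _ "Var y"]) simp
next
  case (NProp p) then have "a = NProp p" by simp
  then show ?case by (intro exI[of _ "Var y"]) simp
qed

lemma fsub_imp_occ: "y \<in> FV c \<Longrightarrow> free_for a y c \<Longrightarrow> occ a (subst c a y)"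
  by (induction c) auto

lemma fsub_occ: "fsub a b \<longleftrightarrow> occ a b"
proof
  assume "fsub a b" then show "occ a b" unfolding fsub_def using fsub_imp_occ by blast
next
  assume o: "occ a b"
  obtain y where "y \<notin> vars b" using finite_vars[of b] ex_new_if_finite[OF infinite_UNIV_nat] by blast
  then show "fsub a b" unfolding fsub_def using occ_imp_fsub_aux[OF o] by blast
qed


section \<open>Generic substitution of a fixpoint for a fresh variable\<close>

lemma subst_rename_back:
  "y' \<notin> FV c \<Longrightarrow> y' \<notin> BV c \<Longrightarrow> y \<noteq> y' \<Longrightarrow> subst (subst c (Var y') y) t y' = subst c t y"
  by (induction c) (auto simp: subst_nofree)

lemma step_Var_False[simp]: "\<not> step (Var z) u"
  by (auto elim: step.cases)
lemma step_Top_False[simp]: "\<not> step Top u"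
  by (auto elim: step.cases)
lemma step_Bot_False[simp]: "\<not> step Bot u"
  by (auto elim: step.cases)
lemma step_Prop_False[simp]: "\<not> step (Prop p) u"
  by (auto elim: step.cases)
lemma step_NProp_False[simp]: "\<not> step (NProp p) u"
  by (auto elim: step.cases)
lemma step_And[simp]: "step (And a b) u \<longleftrightarrow> u = a \<or> u = b"
  by (auto elim: step.cases intro: step.intros)
lemma step_Or[simp]: "step (Or a b) u \<longleftrightarrow> u = a \<or> u = b"
  by (auto elim: step.cases intro: step.intros)
lemma step_Dia[simp]: "step (Dia a) u \<longleftrightarrow> u = a"
  by (auto elim: step.cases intro: step.intros)
lemma step_Box[simp]: "step (Box a) u \<longleftrightarrow> u = a"
  by (auto elim: step.cases intro: step.intros)
lemma step_Fix[simp]: "step (Fix e y a) u \<longleftrightarrow> u = subst a (Fix e y a) y"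
  by (auto elim: step.cases intro: step.intros)

locale Lsub =
  fixes e :: fp and y :: nat and b :: "'p fml" and y' :: nat
  assumes tidyF: "tidy (Fix e y b)" and freshF: "y' \<notin> vars (Fix e y b)"
begin

abbreviation F where "F \<equiv> Fix e y b"
abbreviation b' where "b' \<equiv> subst b (Var y') y"
abbreviation sig where "sig t \<equiv> subst t F y'"

lemma yy: "y \<noteq> y'" "y' \<notin> FV b" "y' \<notin> BV b"
  using freshF by (auto simp: vars_def)

lemma BVb_FVF: "BV b \<inter> FV F = {}"
  using tidyF by (auto simp: tidy_def)

lemma BV_b': "BV b' = BV b"
  by (rule BV_subst_var)

lemma FV_b': "FV b' \<subseteq> FV F \<union> {y'}"
  using FV_subst_sub[of b "Var y'" y] by auto

lemma tidy_b': "tidy b'"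
  using BV_b' FV_b' BVb_FVF yy unfolding tidy_def by auto

lemma fsize_b': "fsize b' < fsize F"
  by (simp add: fsize_subst_var)

lemma sig_b': "sig b' = subst b F y"
  using subst_rename_back yy by metis

lemma Clos_inv: "t \<in> Clos b' \<Longrightarrow> y' \<notin> BV t \<and> BV t \<inter> FV F = {} \<and> FV t \<subseteq> FV F \<union> {y'}"
  using steps_BV[of b' t] steps_FV[of b' t] BV_b' FV_b' BVb_FVF yy unfolding Clos_def by auto

lemma sig_Fix: "z \<noteq> y' \<Longrightarrow> sig (Fix e2 z c) = Fix e2 z (sig c)"
  by simp

lemma step_sig: "y' \<notin> BV t \<Longrightarrow> BV t \<inter> FV F = {} \<Longrightarrow> step t u \<Longrightarrow> step (sig t) (sig u)"
proof (cases t)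
  case (Fix e2 z c)
  assume h: "y' \<notin> BV t" "BV t \<inter> FV F = {}" "step t u"
  have "z \<noteq> y'" "z \<notin> FV F" "y' \<notin> BV c" using h Fix by auto
  then have "sig (subst c (Fix e2 z c) z) = subst (sig c) (sig (Fix e2 z c)) z"
    using subst_comm by metis
  then show ?thesis using h Fix \<open>z \<noteq> y'\<close> by auto
qed auto

lemma step_sig_inv: "t \<noteq> Var y' \<Longrightarrow> y' \<notin> BV t \<Longrightarrow> BV t \<inter> FV F = {} \<Longrightarrow> step (sig t) u \<Longrightarrow>
   \<exists>v. step t v \<and> u = sig v"
proof (cases t)
  case (Fix e2 z c)
  assume h: "y' \<notin> BV t" "BV t \<inter> FV F = {}" "step (sig t) u"
  have "z \<noteq> y'" "z \<notin> FV F" "y' \<notin> BV c" using h Fix by auto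
  then have "sig (subst c (Fix e2 z c) z) = subst (sig c) (sig (Fix e2 z c)) z"
    using subst_comm by metis
  then show ?thesis using h Fix \<open>z \<noteq> y'\<close> by auto
qed (auto split: if_splits)

lemma Clos_sig_aux: "step\<^sup>*\<^sup>* b' t \<Longrightarrow> step\<^sup>*\<^sup>* F (sig t)"
proof (induction rule: rtranclp_induct)
  case base
  then show ?case using sig_b' by (auto intro: step.intros)
next
  case (step t u)
  then have "t \<noteq> Var y'" by auto
  have "t \<in> Clos b'" using step(1) by (simp add: Clos_def)
  then have "step (sig t) (sig u)" using Clos_inv step_sig step(2) by blast
  then show ?case using step(3) by auto
qed

lemma Clos_sig: "t \<in> Clos b' \<Longrightarrow> sig t \<in> Clos F"
  using Clos_sig_aux unfolding Clos_def by blast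

lemma Clos_F_sub_aux: "step\<^sup>*\<^sup>* F u \<Longrightarrow> u = F \<or> u \<in> sig ` Clos b'"
proof (induction rule: rtranclp_induct)
  case base then show ?case by simp
next
  case (step u w)
  have b'C: "b' \<in> Clos b'" by (rule Clos_refl)
  from step(3) show ?case
  proof
    assume "u = F"
    then have "w = sig b'" using step(2) sig_b' by simp
    then show ?thesis using b'C by blast
  next
    assume "u \<in> sig ` Clos b'"
    then obtain t where t: "t \<in> Clos b'" "u = sig t" by blast
    show ?thesis
    proof (cases "t = Var y'")
      case True
      then have "w = sig b'" using step(2) sig_b' t by simp
      then show ?thesis using b'C by blast
    next
      case False
      then obtain v where v: "step t v" "w = sig v" using step_sig_inv Clos_inv[OF t(1)] step(2) t(2) by blast
      then have "v \<in> Clos b'" using t(1) Clos_trans Clos_step by blast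
      then show ?thesis using v by blast
    qed
  qed
qed

lemma Clos_F_sub: "u \<in> Clos F \<Longrightarrow> u = F \<or> u \<in> sig ` Clos b'"
  using Clos_F_sub_aux unfolding Clos_def by blast

end

section \<open>Finiteness of the closure of tidy formulas\<close>

lemma Clos_atomic: "(\<And>u. \<not> step r u) \<Longrightarrow> Clos r = {r}"
  unfolding Clos_def by (auto elim: converse_rtranclpE)

lemma Clos_two: "(\<And>u. step r u \<Longrightarrow> u = a \<or> u = c) \<Longrightarrow> Clos r \<subseteq> insert r (Clos a \<union> Clos c)"
  unfolding Clos_def by (auto elim: converse_rtranclpE)

lemma finite_Clos: "tidy r \<Longrightarrow> finite (Clos r)"
proof (induction "fsize r" arbitrary: r rule: less_induct)
  case less
  show ?case
  proof (cases r)
    case (And a c)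
    have "tidy a" "tidy c" using less.prems And by (auto simp: tidy_def)
    moreover have "fsize a < fsize r" "fsize c < fsize r" using And by auto
    ultimately have "finite (Clos a)" "finite (Clos c)" using less.hyps by blast+
    then show ?thesis using Clos_two[of r a c] And finite_subset by auto
  next
    case (Or a c)
    have "tidy a" "tidy c" using less.prems Or by (auto simp: tidy_def)
    moreover have "fsize a < fsize r" "fsize c < fsize r" using Or by auto
    ultimately have "finite (Clos a)" "finite (Clos c)" using less.hyps by blast+
    then show ?thesis using Clos_two[of r a c] Or finite_subset by auto
  next
    case (Dia a)
    have "tidy a" using less.prems Dia by (auto simp: tidy_def)
    moreover have "fsize a < fsize r" using Dia by auto
    ultimately have "finite (Clos a)" using less.hyps by blast+
    then show ?thesis using Clos_two[of r a a] Dia finite_subset by auto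
  next
    case (Box a)
    have "tidy a" using less.prems Box by (auto simp: tidy_def)
    moreover have "fsize a < fsize r" using Box by auto
    ultimately have "finite (Clos a)" using less.hyps by blast+
    then show ?thesis using Clos_two[of r a a] Box finite_subset by auto
  next
    case (Fix e y b)
    obtain y' where y': "y' \<notin> vars r" using finite_vars[of r] ex_new_if_finite[OF infinite_UNIV_nat] by blast
    interpret L: Lsub e y b y' using less.prems y' Fix by unfold_locales auto
    have "finite (Clos (subst b (Var y') y))"
      using less.hyps L.tidy_b' L.fsize_b' Fix by blast
    then have "finite (insert r ((\<lambda>t. subst t r y') ` Clos (subst b (Var y') y)))" using Fix by simp
    moreover have "Clos r \<subseteq> insert r ((\<lambda>t. subst t r y') ` Clos (subst b (Var y') y))"
      using L.Clos_F_sub Fix by blast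
    ultimately show ?thesis using finite_subset by blast
  qed (auto simp: Clos_atomic)
qed


section \<open>Simulation towards the original formula\<close>

inductive simr :: "nat \<Rightarrow> nat \<Rightarrow> 'p fml \<Rightarrow> 'p fml \<Rightarrow> bool" for y y' where
  sv1: "simr y y' (Var y') (Var y)"
| sv2: "simr y y' (Var y') (Fix e2 y c)"
| svar: "z \<noteq> y' \<Longrightarrow> simr y y' (Var z) (Var z)"
| stop: "simr y y' Top Top"
| sbot: "simr y y' Bot Bot"
| sprop: "simr y y' (Prop p) (Prop p)"
| snprop: "simr y y' (NProp p) (NProp p)"
| sand: "simr y y' a c \<Longrightarrow> simr y y' a2 c2 \<Longrightarrow> simr y y' (And a a2) (And c c2)"
| sor: "simr y y' a c \<Longrightarrow> simr y y' a2 c2 \<Longrightarrow> simr y y' (Or a a2) (Or c c2)"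
| sdia: "simr y y' a c \<Longrightarrow> simr y y' (Dia a) (Dia c)"
| sbox: "simr y y' a c \<Longrightarrow> simr y y' (Box a) (Box c)"
| sfix: "simr y y' a c \<Longrightarrow> simr y y' (Fix e2 z a) (Fix e2 z c)"

lemma simr_subst: "simr y y' p q \<Longrightarrow> simr y y' T1 T2 \<Longrightarrow> z \<noteq> y' \<Longrightarrow>
   (z = y \<longrightarrow> (\<exists>e2 c. T2 = Fix e2 y c)) \<Longrightarrow> simr y y' (subst p T1 z) (subst q T2 z)"
proof (induction rule: simr.induct)
  case sv1 then show ?case by (auto intro: simr.intros)
next
  case (sv2 e2 c) then show ?case by (auto intro: simr.intros)
next
  case (svar w) then show ?case by (auto intro: simr.intros)
next
  case (sfix a c e2 w) then show ?case by (auto intro: simr.intros)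
qed (auto intro: simr.intros)

lemma simr_step: "simr y y' a c \<Longrightarrow> y' \<notin> BV a \<Longrightarrow> step a a2 \<Longrightarrow> \<exists>c2. step c c2 \<and> simr y y' a2 c2"
proof (induction rule: simr.induct)
  case (sfix a c e2 z)
  have "simr y y' (Fix e2 z a) (Fix e2 z c)" using sfix.hyps by (rule simr.sfix)
  then have "simr y y' (subst a (Fix e2 z a) z) (subst c (Fix e2 z c) z)"
    using simr_subst sfix by fastforce
  then show ?case using sfix.prems by auto
qed auto

lemma simr_refl: "y' \<notin> FV c \<Longrightarrow> y' \<notin> BV c \<Longrightarrow> simr y y' c c"
  by (induction c) (auto intro: simr.intros)

lemma simr_base: "y' \<notin> FV c \<Longrightarrow> y' \<notin> BV c \<Longrightarrow> simr y y' (subst c (Var y') y) c"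
  by (induction c) (auto intro: simr.intros simr_refl)

lemma simr_noy': "simr y y' a c \<Longrightarrow> y' \<notin> FV a \<Longrightarrow> y' \<notin> BV a \<Longrightarrow> c = a"
  by (induction rule: simr.induct) auto

lemma occ_Var_FV: "z \<in> FV a \<Longrightarrow> occ (Var z) a"
  by (induction a) auto

section \<open>Chains and the closure order\<close>

lemma alt_chain_Nil[simp]: "alt_chain []"
  by (simp add: alt_chain_def)

lemma alt_chain_Cons: "alt_chain (c # cs) \<longleftrightarrow> tidy c \<and> is_fix c \<and> alt_chain cs \<and>
   (cs \<noteq> [] \<longrightarrow> sqlt c (hd cs) \<and> fix_type (hd cs) = dual (fix_type c))"
proof
  assume a: "alt_chain (c # cs)"
  have 1: "tidy c \<and> is_fix c" "\<forall>d\<in>set cs. tidy d \<and> is_fix d" using a unfolding alt_chain_def by auto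
  have 2: "\<forall>i. Suc i < length cs \<longrightarrow> sqlt (cs ! i) (cs ! Suc i) \<and> fix_type (cs ! Suc i) = dual (fix_type (cs ! i))"
  proof (intro allI impI)
    fix i assume "Suc i < length cs"
    then have "Suc (Suc i) < length (c # cs)" by simp
    then show "sqlt (cs ! i) (cs ! Suc i) \<and> fix_type (cs ! Suc i) = dual (fix_type (cs ! i))"
      using a unfolding alt_chain_def by (metis nth_Cons_Suc)
  qed
  have 3: "cs \<noteq> [] \<longrightarrow> sqlt c (hd cs) \<and> fix_type (hd cs) = dual (fix_type c)"
  proof
    assume "cs \<noteq> []"
    then have "Suc 0 < length (c # cs)" by simp
    then have "sqlt ((c # cs) ! 0) ((c # cs) ! Suc 0) \<and> fix_type ((c # cs) ! Suc 0) = dual (fix_type ((c # cs) ! 0))"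
      using a unfolding alt_chain_def by blast
    then show "sqlt c (hd cs) \<and> fix_type (hd cs) = dual (fix_type c)" using \<open>cs \<noteq> []\<close> by (simp add: hd_conv_nth)
  qed
  show "tidy c \<and> is_fix c \<and> alt_chain cs \<and> (cs \<noteq> [] \<longrightarrow> sqlt c (hd cs) \<and> fix_type (hd cs) = dual (fix_type c))"
    using 1 2 3 unfolding alt_chain_def by blast
next
  assume a: "tidy c \<and> is_fix c \<and> alt_chain cs \<and> (cs \<noteq> [] \<longrightarrow> sqlt c (hd cs) \<and> fix_type (hd cs) = dual (fix_type c))"
  have A: "\<forall>d\<in>set (c # cs). tidy d \<and> is_fix d" using a unfolding alt_chain_def by auto
  have B: "\<forall>i. Suc i < length (c # cs) \<longrightarrow> sqlt ((c # cs) ! i) ((c # cs) ! Suc i) \<and> fix_type ((c # cs) ! Suc i) = dual (fix_type ((c # cs) ! i))"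
  proof (intro allI impI)
    fix i assume i: "Suc i < length (c # cs)"
    show "sqlt ((c # cs) ! i) ((c # cs) ! Suc i) \<and> fix_type ((c # cs) ! Suc i) = dual (fix_type ((c # cs) ! i))"
    proof (cases i)
      case 0
      then have "cs \<noteq> []" using i by auto
      then show ?thesis using a 0 by (simp add: hd_conv_nth)
    next
      case (Suc j)
      then have "Suc j < length cs" using i by simp
      then show ?thesis using a Suc unfolding alt_chain_def by simp
    qed
  qed
  show "alt_chain (c # cs)" using A B unfolding alt_chain_def by blast
qed

lemma R_mono: "(\<lambda>a c. step a c \<and> fsub p c)\<^sup>*\<^sup>* u v \<Longrightarrow> fsub q p \<Longrightarrow> (\<lambda>a c. step a c \<and> fsub q c)\<^sup>*\<^sup>* u v"
proof (induction rule: rtranclp_induct)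
  case base then show ?case by simp
next
  case (step v w)
  then have fw: "fsub q w" using occ_trans unfolding fsub_occ by blast
  have IH: "(\<lambda>a c. step a c \<and> fsub q c)\<^sup>*\<^sup>* u v" using step by blast
  show ?case
    apply (rule rtranclp.rtrancl_into_rtrancl[OF IH])
    using fw step(2) by simp
qed

lemma R_Clos0: "(\<lambda>a c. step a c \<and> fsub p c)\<^sup>*\<^sup>* a t \<Longrightarrow> t \<in> Clos a"
  unfolding Clos_def by (induction rule: rtranclp_induct) auto

lemma R_last0: "(\<lambda>a c. step a c \<and> fsub p c)\<^sup>*\<^sup>* a t \<Longrightarrow> t = a \<or> fsub p t"
  by (induction rule: rtranclp_induct) auto

lemma sqle_occ: "sqle a b \<Longrightarrow> occ b a"
  unfolding sqle_def trace_within_def using R_last0 fsub_occ by fastforce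

lemma sqle_Clos: "sqle a b \<Longrightarrow> a \<in> Clos b"
  unfolding sqle_def trace_within_def using R_Clos0 by blast

lemma sqle_refl: "is_fix a \<Longrightarrow> sqle a a"
  unfolding sqle_def trace_within_def by (simp add: fsub_occ)

lemma sqle_trans: "sqle a b \<Longrightarrow> sqle b c \<Longrightarrow> sqle a c"
proof -
  assume ab: "sqle a b" and bc: "sqle b c"
  have "fsub c b" using sqle_occ[OF bc] fsub_occ by blast
  moreover have "(\<lambda>u v. step u v \<and> fsub b v)\<^sup>*\<^sup>* b a" using ab unfolding sqle_def trace_within_def by blast
  ultimately have "(\<lambda>u v. step u v \<and> fsub c v)\<^sup>*\<^sup>* b a" using R_mono by blast
  moreover have "(\<lambda>u v. step u v \<and> fsub c v)\<^sup>*\<^sup>* c b" using bc unfolding sqle_def trace_within_def by blast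
  ultimately show "sqle a c" using ab bc unfolding sqle_def trace_within_def by (meson rtranclp_trans)
qed

lemma sqle_antisym: "sqle a b \<Longrightarrow> sqle b a \<Longrightarrow> a = b"
  using sqle_occ occ_antisym by blast

lemma sqlt_irrefl: "\<not> sqlt a a"
  by (simp add: sqlt_def)

lemma sqlt_trans: "sqlt a b \<Longrightarrow> sqlt b c \<Longrightarrow> sqlt a c"
  unfolding sqlt_def using sqle_trans by blast

lemma chain_hd_le: "alt_chain cs \<Longrightarrow> cs \<noteq> [] \<Longrightarrow> \<forall>c \<in> set cs. sqle (hd cs) c"
proof (induction cs)
  case Nil then show ?case by simp
next
  case (Cons c rest)
  have cf: "is_fix c" using Cons.prems alt_chain_Cons by blast
  show ?case
  proof (cases "rest = []")
    case True then show ?thesis using sqle_refl cf by simp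
  next
    case False
    have r: "alt_chain rest" "sqlt c (hd rest)" using Cons.prems alt_chain_Cons False by blast+
    then have "\<forall>d \<in> set rest. sqle (hd rest) d" using Cons.IH False by blast
    then show ?thesis using r(2) sqle_trans sqle_refl cf unfolding sqlt_def by auto
  qed
qed

lemma chain_distinct: "alt_chain cs \<Longrightarrow> distinct cs"
proof (induction cs)
  case Nil then show ?case by simp
next
  case (Cons c rest)
  show ?case
  proof (cases "rest = []")
    case True then show ?thesis by simp
  next
    case False
    have r: "alt_chain rest" "sqlt c (hd rest)" using Cons.prems alt_chain_Cons False by blast+
    have "c \<notin> set rest"
    proof
      assume "c \<in> set rest"
      then have "sqle (hd rest) c" using chain_hd_le r(1) False by blast
      then show False using r(2) unfolding sqlt_def by blast
    qed
    then show ?thesis using Cons.IH r(1) by simp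
  qed
qed

lemma chain_last_Clos: "alt_chain cs \<Longrightarrow> cs \<noteq> [] \<Longrightarrow> \<forall>c \<in> set cs. c \<in> Clos (last cs)"
proof (induction cs)
  case Nil then show ?case by simp
next
  case (Cons c rest)
  show ?case
  proof (cases "rest = []")
    case True then show ?thesis by (simp add: Clos_refl)
  next
    case False
    have r: "alt_chain rest" "sqlt c (hd rest)" using Cons.prems alt_chain_Cons False by blast+
    then have IH: "\<forall>d \<in> set rest. d \<in> Clos (last rest)" using Cons.IH False by blast
    have "hd rest \<in> set rest" using False by simp
    then have "c \<in> Clos (last rest)" using IH r(2) sqle_Clos Clos_trans unfolding sqlt_def by blast
    then show ?thesis using IH False by simp
  qed
qed

locale Msub = Lsub +
  assumes yfree: "y \<in> FV b" and notclos: "F \<notin> Clos b"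
begin

lemma simr_Clos_aux: "step\<^sup>*\<^sup>* b' t \<Longrightarrow> \<exists>c. step\<^sup>*\<^sup>* b c \<and> simr y y' t c"
proof (induction rule: rtranclp_induct)
  case base then show ?case using simr_base yy by blast
next
  case (step t u)
  then obtain c where c: "step\<^sup>*\<^sup>* b c" "simr y y' t c" by blast
  have "y' \<notin> BV t" using Clos_inv step(1) by (simp add: Clos_def)
  then obtain c2 where "step c c2" "simr y y' u c2" using simr_step c(2) step(2) by blast
  then show ?case using c(1) by (meson rtranclp.rtrancl_into_rtrancl)
qed

lemma F_notin: "F \<notin> Clos b'"
proof
  assume "F \<in> Clos b'"
  then obtain c where c: "step\<^sup>*\<^sup>* b c" "simr y y' F c" using simr_Clos_aux by (auto simp: Clos_def)
  have "y' \<notin> FV F" "y' \<notin> BV F" using freshF by (auto simp: vars_def)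
  then have "c = F" using simr_noy' c(2) by blast
  then show False using notclos c(1) by (simp add: Clos_def)
qed

definition good where
  "good t \<longleftrightarrow> y' \<notin> BV t \<and> BV t \<inter> FV F = {} \<and> \<not> occ F t"

lemma good_Clos: "t \<in> Clos b' \<Longrightarrow> good t"
  using Clos_inv F_notin occ_Clos Clos_trans unfolding good_def by blast

lemma good_Var[simp]: "good (Var z) \<longleftrightarrow> True"
  by (simp add: good_def)

lemma good_And: "good (And p q) \<Longrightarrow> good p \<and> good q"
  by (auto simp: good_def)
lemma good_Or: "good (Or p q) \<Longrightarrow> good p \<and> good q"
  by (auto simp: good_def)
lemma good_Dia: "good (Dia p) \<Longrightarrow> good p"
  by (auto simp: good_def)
lemma good_Box: "good (Box p) \<Longrightarrow> good p"
  by (auto simp: good_def)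
lemma good_Fix: "good (Fix e2 z p) \<Longrightarrow> good p \<and> z \<noteq> y' \<and> z \<notin> FV F"
  by (auto simp: good_def)

lemma sig_eq_b: "y' \<notin> BV c \<Longrightarrow> BV c \<inter> FV F = {} \<Longrightarrow> sig c = b \<Longrightarrow> c = b"
proof -
  assume h: "y' \<notin> BV c" "BV c \<inter> FV F = {}" "sig c = b"
  show "c = b"
  proof (cases "y' \<in> FV c")
    case True
    then have "occ F (sig c)" using occ_subst_T h(2) by blast
    then have "fsize F \<le> fsize b" using h(3) occ_fsize by fastforce
    then show ?thesis by simp
  next
    case False
    then show ?thesis using h(3) subst_nofree by metis
  qed
qed

lemma sig_eq_F: "good c \<Longrightarrow> sig c = F \<Longrightarrow> c = Var y'"
proof (cases c)
  case (Fix e2 z d)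
  assume g: "good c" and eq: "sig c = F"
  have gz: "good d" "z \<noteq> y'" using good_Fix[of e2 z d] g Fix by auto
  then have "Fix e2 z (sig d) = F" using eq Fix by simp
  then have "e2 = e" "z = y" "sig d = b" by auto
  moreover have "d = b" using sig_eq_b gz(1) \<open>sig d = b\<close> unfolding good_def by blast
  ultimately have "c = F" using Fix by simp
  then show ?thesis using g unfolding good_def by simp
qed (auto split: if_splits)

lemma sig_neq_F: "a \<noteq> Var y' \<Longrightarrow> good a \<Longrightarrow> sig a \<noteq> F"
  using sig_eq_F by blast

lemma sig_inj: "good a \<Longrightarrow> good c \<Longrightarrow> sig a = sig c \<Longrightarrow> a = c"
proof (induction a arbitrary: c)
  case (Var z)
  show ?case
  proof (cases "z = y'")
    case True
    then have "sig c = F" using Var.prems(3) by simp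
    then show ?thesis using Var.prems(2) sig_eq_F True by blast
  next
    case False
    then have "sig c = Var z" using Var.prems(3) by simp
    then show ?thesis using False by (cases c) (auto split: if_splits)
  qed
next
  case (And p q)
  have g: "good p" "good q" using good_And[OF And.prems(1)] by auto
  have nF: "sig c \<noteq> F"
  proof
    assume "sig c = F"
    then have "sig (And p q) = F" using And.prems(3) by simp
    then show False by simp
  qed
  show ?case
  proof (cases c)
    case (And p2 q2)
    have "sig p = sig p2" "sig q = sig q2" using And.prems(3) \<open>c = And p2 q2\<close> by simp_all
    then show ?thesis using And.IH g good_And[of p2 q2] And.prems(2) \<open>c = And p2 q2\<close> by blast
  qed (use And.prems nF in \<open>simp_all split: if_splits\<close>)
next
  case (Or p q)
  have g: "good p" "good q" using good_Or[OF Or.prems(1)] by auto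
  have nF: "sig c \<noteq> F"
  proof
    assume "sig c = F"
    then have "sig (Or p q) = F" using Or.prems(3) by simp
    then show False by simp
  qed
  show ?case
  proof (cases c)
    case (Or p2 q2)
    have "sig p = sig p2" "sig q = sig q2" using Or.prems(3) \<open>c = Or p2 q2\<close> by simp_all
    then show ?thesis using Or.IH g good_Or[of p2 q2] Or.prems(2) \<open>c = Or p2 q2\<close> by blast
  qed (use Or.prems nF in \<open>simp_all split: if_splits\<close>)
next
  case (Dia p)
  have g: "good p" using good_Dia[OF Dia.prems(1)] by auto
  have nF: "sig c \<noteq> F"
  proof
    assume "sig c = F"
    then have "sig (Dia p) = F" using Dia.prems(3) by simp
    then show False by simp
  qed
  show ?case
  proof (cases c)
    case (Dia p2)
    have "sig p = sig p2" using Dia.prems(3) \<open>c = Dia p2\<close> by simp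
    then show ?thesis using Dia.IH g good_Dia[of p2] Dia.prems(2) \<open>c = Dia p2\<close> by blast
  qed (use Dia.prems nF in \<open>simp_all split: if_splits\<close>)
next
  case (Box p)
  have g: "good p" using good_Box[OF Box.prems(1)] by auto
  have nF: "sig c \<noteq> F"
  proof
    assume "sig c = F"
    then have "sig (Box p) = F" using Box.prems(3) by simp
    then show False by simp
  qed
  show ?case
  proof (cases c)
    case (Box p2)
    have "sig p = sig p2" using Box.prems(3) \<open>c = Box p2\<close> by simp
    then show ?thesis using Box.IH g good_Box[of p2] Box.prems(2) \<open>c = Box p2\<close> by blast
  qed (use Box.prems nF in \<open>simp_all split: if_splits\<close>)
next
  case (Fix e2 z p)
  have g: "good p" "z \<noteq> y'" using good_Fix[OF Fix.prems(1)] by auto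
  have sa: "sig (Fix e2 z p) = Fix e2 z (sig p)" using g(2) by simp
  have nF: "sig c \<noteq> F"
  proof
    assume "sig c = F"
    then have "sig (Fix e2 z p) = F" using Fix.prems(3) by simp
    then have "Fix e2 z p = Var y'" using sig_eq_F Fix.prems(1) by blast
    then show False by simp
  qed
  have cy: "c \<noteq> Var y'" using nF by auto
  show ?case
  proof (cases c)
    case (Fix e3 w q)
    have gq: "good q" "w \<noteq> y'" using good_Fix[of e3 w q] Fix.prems(2) \<open>c = Fix e3 w q\<close> by auto
    have "Fix e2 z (sig p) = Fix e3 w (sig q)" using Fix.prems(3) sa \<open>c = Fix e3 w q\<close> gq(2) by simp
    then have "e2 = e3" "z = w" "sig p = sig q" by simp_all
    then show ?thesis using Fix.IH[of q] g gq \<open>c = Fix e3 w q\<close> by blast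
  qed (use Fix.prems(3) sa nF cy in \<open>simp_all split: if_splits\<close>)
next
  case Top
  then show ?case by (cases c) (simp_all split: if_splits)
next
  case Bot
  then show ?case by (cases c) (simp_all split: if_splits)
next
  case (Prop x)
  then show ?case by (cases c) (simp_all split: if_splits)
next
  case (NProp x)
  then show ?case by (cases c) (simp_all split: if_splits)
qed

lemma inj_sig: "inj_on sig (Clos b')"
  using sig_inj good_Clos unfolding inj_on_def by blast

lemma Var_y'_Clos: "Var y' \<in> Clos b'"
proof -
  have "y' \<in> FV b'" using FV_subst_eq[of b "Var y'" y] yfree yy by auto
  then show ?thesis using occ_Var_FV occ_Clos by blast
qed

lemma sig_image: "sig ` Clos b' = Clos F"
proof
  show "sig ` Clos b' \<subseteq> Clos F" using Clos_sig by blast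
next
  show "Clos F \<subseteq> sig ` Clos b'"
  proof
    fix u assume "u \<in> Clos F"
    then have "u = F \<or> u \<in> sig ` Clos b'" by (rule Clos_F_sub)
    moreover have "F = sig (Var y')" by simp
    ultimately show "u \<in> sig ` Clos b'" using Var_y'_Clos by blast
  qed
qed

lemma bij_sig: "bij_betw sig (Clos b') (Clos F)"
  using inj_sig sig_image unfolding bij_betw_def by blast


lemma Clos_b'_trans: "t \<in> Clos b' \<Longrightarrow> u \<in> Clos t \<Longrightarrow> u \<in> Clos b'"
  by (rule Clos_trans)

lemma step_iff: "phi \<in> Clos b' \<Longrightarrow> psi \<in> Clos b' \<Longrightarrow> phi \<noteq> Var y' \<Longrightarrow>
   step phi psi \<longleftrightarrow> step (sig phi) (sig psi)"
proof
  assume h: "phi \<in> Clos b'" "psi \<in> Clos b'" "phi \<noteq> Var y'"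
  show "step phi psi \<Longrightarrow> step (sig phi) (sig psi)" using step_sig Clos_inv[OF h(1)] by blast
  assume st: "step (sig phi) (sig psi)"
  then obtain v where v: "step phi v" "sig psi = sig v" using step_sig_inv Clos_inv[OF h(1)] h(3) by blast
  have "v \<in> Clos b'" using v(1) h(1) Clos_trans Clos_step by blast
  then have "psi = v" using v(2) inj_sig h(2) unfolding inj_on_def by blast
  then show "step phi psi" using v(1) by simp
qed

lemma Ln_iff: "phi \<in> Clos b' \<Longrightarrow> phi \<noteq> Var y' \<Longrightarrow> Ln phi = Ln (sig phi)"
proof -
  assume h: "phi \<in> Clos b'" "phi \<noteq> Var y'"
  have "y' \<notin> BV phi" using Clos_inv[OF h(1)] by blast
  then show ?thesis using h(2) by (cases phi) auto
qed

lemma occn_sig: "occn phi psi n \<Longrightarrow> y' \<notin> BV psi \<Longrightarrow> BV psi \<inter> FV F = {} \<Longrightarrow> occ (sig phi) (sig psi)"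
proof (induction rule: occn.induct)
  case (orefl a) show ?case by (rule occ_refl)
next
  case (oandL a u n v)
  have "y' \<notin> BV u" "BV u \<inter> FV F = {}" using oandL.prems by auto
  then have "occ (sig a) (sig u)" using oandL.IH by blast
  then show ?case by simp
next
  case (oandR a v n u)
  have "y' \<notin> BV v" "BV v \<inter> FV F = {}" using oandR.prems by auto
  then have "occ (sig a) (sig v)" using oandR.IH by blast
  then show ?case by simp
next
  case (oorL a u n v)
  have "y' \<notin> BV u" "BV u \<inter> FV F = {}" using oorL.prems by auto
  then have "occ (sig a) (sig u)" using oorL.IH by blast
  then show ?case by simp
next
  case (oorR a v n u)
  have "y' \<notin> BV v" "BV v \<inter> FV F = {}" using oorR.prems by auto
  then have "occ (sig a) (sig v)" using oorR.IH by blast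
  then show ?case by simp
next
  case (odia a u n)
  have "y' \<notin> BV u" "BV u \<inter> FV F = {}" using odia.prems by auto
  then have "occ (sig a) (sig u)" using odia.IH by blast
  then show ?case by simp
next
  case (obox a u n)
  have "y' \<notin> BV u" "BV u \<inter> FV F = {}" using obox.prems by auto
  then have "occ (sig a) (sig u)" using obox.IH by blast
  then show ?case by simp
next
  case (ofix a u n w e2)
  have w: "w \<noteq> y'" "w \<notin> FV F" using ofix.prems by auto
  have "y' \<notin> BV u" "BV u \<inter> FV F = {}" using ofix.prems by auto
  then have "occ (sig a) (sig u)" using ofix.IH by blast
  moreover have "w \<notin> FV (sig a)" using FV_subst_sub[of a F y'] ofix.hyps(2) w(2) by blast
  moreover have "sig (Fix e2 w u) = Fix e2 w (sig u)" using w(1) by simp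
  ultimately show ?case by simp
qed

lemma occ_sig_back: "good phi \<Longrightarrow> y' \<in> FV phi \<Longrightarrow> good psi \<Longrightarrow> occ (sig phi) (sig psi) \<Longrightarrow> occ phi psi"
proof (induction psi)
  case (Var z)
  show ?case
  proof (cases "z = y'")
    case True
    then have "occ (sig phi) F" using Var.prems(4) by simp
    moreover have "occ F (sig phi)" using occ_subst_T Var.prems(1,2) unfolding good_def by blast
    ultimately have "sig phi = F" using occ_antisym by blast
    then have "sig phi = sig (Var z)" using True by simp
    then have "phi = Var z" using sig_inj Var.prems(1,3) by blast
    then show ?thesis by simp
  next
    case False
    then have "sig phi = sig (Var z)" using Var.prems(4) by simp
    then have "phi = Var z" using sig_inj Var.prems(1,3) by blast
    then show ?thesis by simp
  qed
next
  case (And p q)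
  have g: "good p" "good q" using good_And[OF And.prems(3)] by auto
  have "sig phi = sig (And p q) \<or> occ (sig phi) (sig p) \<or> occ (sig phi) (sig q)" using And.prems(4) by simp
  moreover have "sig phi = sig (And p q) \<Longrightarrow> ?case" using sig_inj And.prems(1,3) by (metis occ_refl)
  moreover have "occ (sig phi) (sig p) \<Longrightarrow> ?case" using And.IH(1)[OF And.prems(1,2) g(1)] by simp
  moreover have "occ (sig phi) (sig q) \<Longrightarrow> ?case" using And.IH(2)[OF And.prems(1,2) g(2)] by simp
  ultimately show ?case by blast
next
  case (Or p q)
  have g: "good p" "good q" using good_Or[OF Or.prems(3)] by auto
  have "sig phi = sig (Or p q) \<or> occ (sig phi) (sig p) \<or> occ (sig phi) (sig q)" using Or.prems(4) by simp
  moreover have "sig phi = sig (Or p q) \<Longrightarrow> ?case" using sig_inj Or.prems(1,3) by (metis occ_refl)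
  moreover have "occ (sig phi) (sig p) \<Longrightarrow> ?case" using Or.IH(1)[OF Or.prems(1,2) g(1)] by simp
  moreover have "occ (sig phi) (sig q) \<Longrightarrow> ?case" using Or.IH(2)[OF Or.prems(1,2) g(2)] by simp
  ultimately show ?case by blast
next
  case (Dia p)
  have g: "good p" using good_Dia[OF Dia.prems(3)] by auto
  have "sig phi = sig (Dia p) \<or> occ (sig phi) (sig p)" using Dia.prems(4) by simp
  moreover have "sig phi = sig (Dia p) \<Longrightarrow> ?case" using sig_inj Dia.prems(1,3) by (metis occ_refl)
  moreover have "occ (sig phi) (sig p) \<Longrightarrow> ?case" using Dia.IH[OF Dia.prems(1,2) g] by simp
  ultimately show ?case by blast
next
  case (Box p)
  have g: "good p" using good_Box[OF Box.prems(3)] by auto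
  have "sig phi = sig (Box p) \<or> occ (sig phi) (sig p)" using Box.prems(4) by simp
  moreover have "sig phi = sig (Box p) \<Longrightarrow> ?case" using sig_inj Box.prems(1,3) by (metis occ_refl)
  moreover have "occ (sig phi) (sig p) \<Longrightarrow> ?case" using Box.IH[OF Box.prems(1,2) g] by simp
  ultimately show ?case by blast
next
  case (Fix e2 w p)
  have g: "good p" "w \<noteq> y'" using good_Fix[OF Fix.prems(3)] by auto
  have "sig phi = sig (Fix e2 w p) \<or> (occ (sig phi) (sig p) \<and> w \<notin> FV (sig phi))" using Fix.prems(4) g(2) by simp
  then show ?case
  proof
    assume "sig phi = sig (Fix e2 w p)"
    then show ?thesis using sig_inj Fix.prems(1,3) by (metis occ_refl)
  next
    assume a: "occ (sig phi) (sig p) \<and> w \<notin> FV (sig phi)"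
    then have "occ phi p" using Fix.IH[OF Fix.prems(1,2) g(1)] by blast
    moreover have "w \<notin> FV phi" using a FV_subst_sup[of phi y' F] g(2) by auto
    ultimately show ?thesis by simp
  qed
next
  case Top
  then have "sig phi = sig Top" by simp
  then have "phi = Top" using sig_inj Top.prems(1,3) by blast
  then show ?case by simp
next
  case Bot
  then have "sig phi = sig Bot" by simp
  then have "phi = Bot" using sig_inj Bot.prems(1,3) by blast
  then show ?case by simp
next
  case (Prop x)
  then have "sig phi = sig (Prop x)" by simp
  then have "phi = Prop x" using sig_inj Prop.prems(1,3) by blast
  then show ?case by simp
next
  case (NProp x)
  then have "sig phi = sig (NProp x)" by simp
  then have "phi = NProp x" using sig_inj NProp.prems(1,3) by blast
  then show ?case by simp
qed

lemma fsub_iff: "phi \<in> Clos b' \<Longrightarrow> psi \<in> Clos b' \<Longrightarrow> y' \<in> FV phi \<Longrightarrow>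
   fsub phi psi \<longleftrightarrow> fsub (sig phi) (sig psi)"
  unfolding fsub_occ
  using occn_sig occ_sig_back good_Clos Clos_inv unfolding occ_def by blast


lemma R_Clos: "(\<lambda>a c. step a c \<and> fsub p c)\<^sup>*\<^sup>* a t \<Longrightarrow> t \<in> Clos a"
  unfolding Clos_def by (induction rule: rtranclp_induct) auto

lemma R_last: "(\<lambda>a c. step a c \<and> fsub p c)\<^sup>*\<^sup>* a t \<Longrightarrow> t = a \<or> fsub p t"
  by (induction rule: rtranclp_induct) auto

lemma fsub_Var: "fsub p (Var z) \<Longrightarrow> p = Var z"
  by (simp add: fsub_occ)

lemma is_fix_sig: "t \<noteq> Var y' \<Longrightarrow> is_fix (sig t) \<longleftrightarrow> is_fix t"
  by (cases t) auto

lemma fix_type_sig: "is_fix t \<Longrightarrow> fix_type (sig t) = fix_type t"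
  by (cases t) auto

lemma sqle_fwd:
  assumes phi: "phi \<in> Clos b'" "is_fix phi" "y' \<in> FV phi"
  shows "(\<lambda>a c. step a c \<and> fsub phi c)\<^sup>*\<^sup>* phi t \<Longrightarrow> (\<lambda>a c. step a c \<and> fsub (sig phi) c)\<^sup>*\<^sup>* (sig phi) (sig t)"
proof (induction rule: rtranclp_induct)
  case base then show ?case by simp
next
  case (step t u)
  have tC: "t \<in> Clos b'" using R_Clos[OF step(1)] phi(1) Clos_trans by blast
  have "t = phi \<or> fsub phi t" using R_last[OF step(1)] .
  then have tn: "t \<noteq> Var y'" using phi(2) fsub_Var by fastforce
  have uC: "u \<in> Clos b'" using tC step(2) Clos_trans Clos_step by blast
  have "step (sig t) (sig u)" using step_sig Clos_inv[OF tC] step(2) by blast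
  moreover have "fsub (sig phi) (sig u)" using fsub_iff[OF phi(1) uC phi(3)] step(2) by blast
  ultimately show ?case using step(3) by (simp add: rtranclp.rtrancl_into_rtrancl)
qed

lemma sqle_back:
  assumes phi: "phi \<in> Clos b'" "is_fix phi" "y' \<in> FV phi"
  shows "(\<lambda>a c. step a c \<and> fsub (sig phi) c)\<^sup>*\<^sup>* (sig phi) u \<Longrightarrow>
    \<exists>t. u = sig t \<and> (\<lambda>a c. step a c \<and> fsub phi c)\<^sup>*\<^sup>* phi t"
proof (induction rule: rtranclp_induct)
  case base then show ?case by blast
next
  case (step u w)
  then obtain t where t: "u = sig t" "(\<lambda>a c. step a c \<and> fsub phi c)\<^sup>*\<^sup>* phi t" by blast
  have tC: "t \<in> Clos b'" using R_Clos[OF t(2)] phi(1) Clos_trans by blast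
  have "t = phi \<or> fsub phi t" using R_last[OF t(2)] .
  then have tn: "t \<noteq> Var y'" using phi(2) fsub_Var by fastforce
  obtain v where v: "step t v" "w = sig v" using step_sig_inv[OF tn] Clos_inv[OF tC] step(2) t(1) by blast
  have vC: "v \<in> Clos b'" using tC v(1) Clos_trans Clos_step by blast
  have "fsub phi v" using fsub_iff[OF phi(1) vC phi(3)] step(2) v(2) by blast
  then have "(\<lambda>a c. step a c \<and> fsub phi c)\<^sup>*\<^sup>* phi v" using v(1) t(2) rtranclp.rtrancl_into_rtrancl[of _ phi t v] by blast
  then show ?case using v(2) by blast
qed

lemma fsub_refl: "fsub p p"
  by (simp add: fsub_occ)

lemma sqle_iff:
  assumes phi: "phi \<in> Clos b'" "is_fix phi" and psi: "psi \<in> Clos b'" "is_fix psi"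
  shows "sqle psi phi \<longleftrightarrow> sqle (sig psi) (sig phi)"
proof -
  have nphi: "phi \<noteq> Var y'" and npsi: "psi \<noteq> Var y'" using phi psi by auto
  have fx: "is_fix (sig phi)" "is_fix (sig psi)" using is_fix_sig nphi npsi phi psi by auto
  show ?thesis
  proof (cases "y' \<in> FV phi")
    case True
    show ?thesis
    proof
      assume "sqle psi phi"
      then have "(\<lambda>a c. step a c \<and> fsub phi c)\<^sup>*\<^sup>* phi psi" unfolding sqle_def trace_within_def by blast
      then have "(\<lambda>a c. step a c \<and> fsub (sig phi) c)\<^sup>*\<^sup>* (sig phi) (sig psi)" using sqle_fwd phi True by blast
      then show "sqle (sig psi) (sig phi)" using fx unfolding sqle_def trace_within_def by (simp add: fsub_refl)
    next
      assume "sqle (sig psi) (sig phi)"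
      then have "(\<lambda>a c. step a c \<and> fsub (sig phi) c)\<^sup>*\<^sup>* (sig phi) (sig psi)" unfolding sqle_def trace_within_def by blast
      then obtain t where t: "sig psi = sig t" "(\<lambda>a c. step a c \<and> fsub phi c)\<^sup>*\<^sup>* phi t" using sqle_back phi True by blast
      have "t \<in> Clos b'" using R_Clos[OF t(2)] phi(1) Clos_trans by blast
      then have "t = psi" using inj_sig psi(1) t(1) unfolding inj_on_def by metis
      then show "sqle psi phi" using t(2) phi psi unfolding sqle_def trace_within_def by (simp add: fsub_refl)
    qed
  next
    case False
    then have sp: "sig phi = phi" by (simp add: subst_nofree)
    show ?thesis
    proof
      assume a: "sqle psi phi"
      then have "(\<lambda>a c. step a c \<and> fsub phi c)\<^sup>*\<^sup>* phi psi" unfolding sqle_def trace_within_def by blast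
      then have "psi \<in> Clos phi" by (rule R_Clos)
      then have "y' \<notin> FV psi" using False steps_FV unfolding Clos_def by blast
      then have "sig psi = psi" by (simp add: subst_nofree)
      then show "sqle (sig psi) (sig phi)" using a sp by simp
    next
      assume a: "sqle (sig psi) (sig phi)"
      then have "(\<lambda>a c. step a c \<and> fsub phi c)\<^sup>*\<^sup>* phi (sig psi)" unfolding sqle_def trace_within_def sp by blast
      then have c: "sig psi \<in> Clos phi" by (rule R_Clos)
      then have "y' \<notin> FV (sig psi)" using False steps_FV unfolding Clos_def by blast
      then have "sig (sig psi) = sig psi" by (simp add: subst_nofree)
      moreover have "sig psi \<in> Clos b'" using c phi(1) Clos_trans by blast
      ultimately have "sig psi = psi" using inj_sig psi(1) unfolding inj_on_def by metis
      then show "sqle psi phi" using a sp by simp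
    qed
  qed
qed

lemma sqle_pre:
  assumes t: "t \<in> Clos b'" "is_fix t" and c: "sqle c (sig t)"
  shows "\<exists>s \<in> Clos b'. c = sig s \<and> is_fix s \<and> sqle s t"
proof (cases "y' \<in> FV t")
  case True
  have "(\<lambda>a c. step a c \<and> fsub (sig t) c)\<^sup>*\<^sup>* (sig t) c" using c unfolding sqle_def trace_within_def by blast
  then obtain s where s: "c = sig s" "(\<lambda>a c. step a c \<and> fsub t c)\<^sup>*\<^sup>* t s" using sqle_back t True by blast
  have sC: "s \<in> Clos b'" using R_Clos[OF s(2)] t(1) Clos_trans by blast
  have "s = t \<or> fsub t s" using R_last[OF s(2)] .
  then have sn: "s \<noteq> Var y'" using t(2) fsub_Var by fastforce
  have "is_fix c" using c unfolding sqle_def by blast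
  then have sf: "is_fix s" using is_fix_sig[OF sn] s(1) by simp
  have "sqle s t" using sqle_iff[OF t sC sf] c s(1) by simp
  then show ?thesis using sC s(1) sf by blast
next
  case False
  then have sp: "sig t = t" by (simp add: subst_nofree)
  have "(\<lambda>a c. step a c \<and> fsub t c)\<^sup>*\<^sup>* t c" using c sp unfolding sqle_def trace_within_def by simp
  then have cc: "c \<in> Clos t" by (rule R_Clos)
  then have "y' \<notin> FV c" using False steps_FV unfolding Clos_def by blast
  then have "sig c = c" by (simp add: subst_nofree)
  moreover have "c \<in> Clos b'" using cc t(1) Clos_trans by blast
  moreover have "is_fix c" "sqle c t" using c sp unfolding sqle_def by auto
  ultimately show ?thesis by metis
qed


lemma tidy_sigC: "t \<in> Clos b' \<Longrightarrow> tidy (sig t)"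
  using Clos_sig tidy_Clos tidyF by blast

lemma tidy_C: "t \<in> Clos b' \<Longrightarrow> tidy t"
  using tidy_Clos tidy_b' by blast

lemma sqlt_iff: "phi \<in> Clos b' \<Longrightarrow> is_fix phi \<Longrightarrow> psi \<in> Clos b' \<Longrightarrow> is_fix psi \<Longrightarrow>
   sqlt psi phi \<longleftrightarrow> sqlt (sig psi) (sig phi)"
  unfolding sqlt_def using sqle_iff by blast

lemma map_chain: "set cs \<subseteq> Clos b' \<Longrightarrow> alt_chain cs \<Longrightarrow> alt_chain (map sig cs)"
proof (induction cs)
  case Nil then show ?case by simp
next
  case (Cons c rest)
  have c: "tidy c" "is_fix c" "alt_chain rest" using Cons.prems alt_chain_Cons by blast+
  have cC: "c \<in> Clos b'" "set rest \<subseteq> Clos b'" using Cons.prems by auto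
  have "alt_chain (map sig rest)" using Cons.IH cC c by blast
  moreover have "tidy (sig c)" using tidy_sigC cC by blast
  moreover have "is_fix (sig c)" using c(2) by (cases c) auto
  moreover have "rest \<noteq> [] \<longrightarrow> sqlt (sig c) (hd (map sig rest)) \<and> fix_type (hd (map sig rest)) = dual (fix_type (sig c))"
  proof
    assume ne: "rest \<noteq> []"
    have h: "sqlt c (hd rest)" "fix_type (hd rest) = dual (fix_type c)" using Cons.prems alt_chain_Cons ne by blast+
    have hC: "hd rest \<in> Clos b'" using cC ne by auto
    have hf: "is_fix (hd rest)" using h(1) unfolding sqlt_def sqle_def by blast
    have "sqlt (sig c) (sig (hd rest))" using sqlt_iff[OF hC hf cC(1) c(2)] h(1) by blast
    moreover have "fix_type (sig (hd rest)) = dual (fix_type (sig c))" using fix_type_sig hf c(2) h(2) by simp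
    ultimately show "sqlt (sig c) (hd (map sig rest)) \<and> fix_type (hd (map sig rest)) = dual (fix_type (sig c))"
      using ne by (simp add: hd_map)
  qed
  ultimately show ?case by (simp add: alt_chain_Cons)
qed

lemma map_chain_back: "set cs \<subseteq> Clos b' \<Longrightarrow> \<forall>c\<in>set cs. is_fix c \<Longrightarrow> alt_chain (map sig cs) \<Longrightarrow> alt_chain cs"
proof (induction cs)
  case Nil then show ?case by simp
next
  case (Cons c rest)
  have cC: "c \<in> Clos b'" "set rest \<subseteq> Clos b'" using Cons.prems by auto
  have cf: "is_fix c" "\<forall>d\<in>set rest. is_fix d" using Cons.prems by auto
  have m: "alt_chain (map sig rest)" using Cons.prems(3) by (simp add: alt_chain_Cons)
  have "alt_chain rest" using Cons.IH cC cf m by blast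
  moreover have "tidy c" using tidy_C cC by blast
  moreover have "rest \<noteq> [] \<longrightarrow> sqlt c (hd rest) \<and> fix_type (hd rest) = dual (fix_type c)"
  proof
    assume ne: "rest \<noteq> []"
    have h: "sqlt (sig c) (sig (hd rest))" "fix_type (sig (hd rest)) = dual (fix_type (sig c))"
      using Cons.prems(3) ne alt_chain_Cons[of "sig c" "map sig rest"] by (simp_all add: hd_map)
    have hC: "hd rest \<in> Clos b'" using cC ne by auto
    have hf: "is_fix (hd rest)" using cf ne by auto
    show "sqlt c (hd rest) \<and> fix_type (hd rest) = dual (fix_type c)"
      using sqlt_iff[OF hC hf cC(1) cf(1)] h fix_type_sig hf cf(1) by simp
  qed
  ultimately show ?case using cf(1) by (simp add: alt_chain_Cons)
qed

lemma chain_pre: "alt_chain ds \<Longrightarrow> ds \<noteq> [] \<Longrightarrow> phi \<in> Clos b' \<Longrightarrow> is_fix phi \<Longrightarrow> last ds = sig phi \<Longrightarrow>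
   \<exists>cs. ds = map sig cs \<and> set cs \<subseteq> Clos b' \<and> (\<forall>c\<in>set cs. is_fix c) \<and> last cs = phi"
proof (induction ds)
  case Nil then show ?case by simp
next
  case (Cons d rest)
  show ?case
  proof (cases "rest = []")
    case True
    then show ?thesis using Cons.prems by (intro exI[of _ "[phi]"]) simp
  next
    case False
    have r: "alt_chain rest" "sqlt d (hd rest)" using Cons.prems(1) alt_chain_Cons False by blast+
    obtain cs where cs: "rest = map sig cs" "set cs \<subseteq> Clos b'" "\<forall>c\<in>set cs. is_fix c" "last cs = phi"
      using Cons.IH r(1) False Cons.prems by auto
    have ne: "cs \<noteq> []" using cs(1) False by auto
    have hC: "hd cs \<in> Clos b'" "is_fix (hd cs)" using cs ne by auto
    have "sqle d (sig (hd cs))" using r(2) cs(1) ne unfolding sqlt_def by (simp add: hd_map)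
    then obtain s where s: "s \<in> Clos b'" "d = sig s" "is_fix s" using sqle_pre[OF hC] by blast
    show ?thesis using s cs ne by (intro exI[of _ "s # cs"]) simp
  qed
qed

lemma h_down_eq: "phi \<in> Clos b' \<Longrightarrow> is_fix phi \<Longrightarrow> h_down phi = h_down (sig phi)"
proof -
  assume phi: "phi \<in> Clos b'" "is_fix phi"
  have "{length cs | cs. alt_chain cs \<and> cs \<noteq> [] \<and> last cs = phi} =
        {length cs | cs. alt_chain cs \<and> cs \<noteq> [] \<and> last cs = sig phi}"
  proof (intro equalityI subsetI)
    fix n assume "n \<in> {length cs | cs. alt_chain cs \<and> cs \<noteq> [] \<and> last cs = phi}"
    then obtain cs where cs: "n = length cs" "alt_chain cs" "cs \<noteq> []" "last cs = phi" by blast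
    have "set cs \<subseteq> Clos b'" using chain_last_Clos[OF cs(2,3)] cs(4) phi(1) Clos_trans by blast
    then have "alt_chain (map sig cs)" using map_chain cs(2) by blast
    moreover have "last (map sig cs) = sig phi" using cs(3,4) by (simp add: last_map)
    ultimately show "n \<in> {length cs | cs. alt_chain cs \<and> cs \<noteq> [] \<and> last cs = sig phi}"
      using cs by (intro CollectI exI[of _ "map sig cs"]) simp
  next
    fix n assume "n \<in> {length cs | cs. alt_chain cs \<and> cs \<noteq> [] \<and> last cs = sig phi}"
    then obtain ds where ds: "n = length ds" "alt_chain ds" "ds \<noteq> []" "last ds = sig phi" by blast
    obtain cs where cs: "ds = map sig cs" "set cs \<subseteq> Clos b'" "\<forall>c\<in>set cs. is_fix c" "last cs = phi"
      using chain_pre ds(2,3,4) phi by blast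
    have "alt_chain cs" using map_chain_back cs ds(2) by blast
    then show "n \<in> {length cs | cs. alt_chain cs \<and> cs \<noteq> [] \<and> last cs = phi}"
      using cs ds by (intro CollectI exI[of _ cs]) simp
  qed
  then show ?thesis unfolding h_down_def by simp
qed

end


section \<open>Heights and priorities\<close>

lemma U_finite: "finite {length cs | cs. alt_chain cs \<and> cs \<noteq> [] \<and> hd cs = a}"
proof -
  have "{length cs | cs. alt_chain cs \<and> cs \<noteq> [] \<and> hd cs = a} \<subseteq> {..card {c. occ c a}}"
  proof
    fix n assume "n \<in> {length cs | cs. alt_chain cs \<and> cs \<noteq> [] \<and> hd cs = a}"
    then obtain cs where cs: "n = length cs" "alt_chain cs" "cs \<noteq> []" "hd cs = a" by blast
    have "set cs \<subseteq> {c. occ c a}" using chain_hd_le[OF cs(2,3)] cs(4) sqle_occ by blast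
    then have "card (set cs) \<le> card {c. occ c a}" using occ_finite card_mono by blast
    moreover have "card (set cs) = length cs" using chain_distinct[OF cs(2)] distinct_card by blast
    ultimately show "n \<in> {..card {c. occ c a}}" using cs(1) by simp
  qed
  then show ?thesis using finite_subset by blast
qed

lemma U_one: "tidy a \<Longrightarrow> is_fix a \<Longrightarrow> Suc 0 \<in> {length cs | cs. alt_chain cs \<and> cs \<noteq> [] \<and> hd cs = a}"
  by (intro CollectI exI[of _ "[a]"]) (simp add: alt_chain_Cons)

lemma U_same: "sqlt b a \<Longrightarrow> fix_type b = fix_type a \<Longrightarrow> tidy b \<Longrightarrow>
  {length cs | cs. alt_chain cs \<and> cs \<noteq> [] \<and> hd cs = a} \<subseteq> {length cs | cs. alt_chain cs \<and> cs \<noteq> [] \<and> hd cs = b}"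
proof
  fix n assume h: "sqlt b a" "fix_type b = fix_type a" "tidy b"
    and "n \<in> {length cs | cs. alt_chain cs \<and> cs \<noteq> [] \<and> hd cs = a}"
  then obtain cs where cs: "n = length cs" "alt_chain cs" "cs \<noteq> []" "hd cs = a" by blast
  obtain rest where rest: "cs = a # rest" using cs(3,4) by (cases cs) auto
  have ch: "alt_chain rest" "rest \<noteq> [] \<longrightarrow> sqlt a (hd rest) \<and> fix_type (hd rest) = dual (fix_type a)"
    using cs(2) rest alt_chain_Cons by blast+
  have bf: "is_fix b" using h(1) unfolding sqlt_def sqle_def by blast
  have "rest \<noteq> [] \<longrightarrow> sqlt b (hd rest) \<and> fix_type (hd rest) = dual (fix_type b)"
  proof
    assume ne: "rest \<noteq> []"
    then have ar: "sqlt a (hd rest)" "fix_type (hd rest) = dual (fix_type a)" using ch by blast+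
    have "sqle b (hd rest)" using sqle_trans h(1) ar(1) unfolding sqlt_def by blast
    moreover have "\<not> sqle (hd rest) b"
    proof
      assume "sqle (hd rest) b"
      then have "sqle (hd rest) a" using sqle_trans h(1) unfolding sqlt_def by blast
      then show False using ar(1) unfolding sqlt_def by blast
    qed
    ultimately show "sqlt b (hd rest) \<and> fix_type (hd rest) = dual (fix_type b)" using ar(2) h(2) unfolding sqlt_def by simp
  qed
  then have "alt_chain (b # rest)" using ch(1) h(3) bf by (simp add: alt_chain_Cons)
  then show "n \<in> {length cs | cs. alt_chain cs \<and> cs \<noteq> [] \<and> hd cs = b}"
    using cs(1) rest by (intro CollectI exI[of _ "b # rest"]) simp
qed

lemma U_diff: "sqlt b a \<Longrightarrow> fix_type a = dual (fix_type b) \<Longrightarrow> tidy b \<Longrightarrow>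
  n \<in> {length cs | cs. alt_chain cs \<and> cs \<noteq> [] \<and> hd cs = a} \<Longrightarrow> Suc n \<in> {length cs | cs. alt_chain cs \<and> cs \<noteq> [] \<and> hd cs = b}"
proof -
  assume h: "sqlt b a" "fix_type a = dual (fix_type b)" "tidy b"
    and "n \<in> {length cs | cs. alt_chain cs \<and> cs \<noteq> [] \<and> hd cs = a}"
  then obtain cs where cs: "n = length cs" "alt_chain cs" "cs \<noteq> []" "hd cs = a" by blast
  have bf: "is_fix b" using h(1) unfolding sqlt_def sqle_def by blast
  have "alt_chain (b # cs)" using cs h bf by (simp add: alt_chain_Cons)
  then show ?thesis using cs by (intro CollectI exI[of _ "b # cs"]) simp
qed

lemma g_mono: "(db::int) \<le> da \<Longrightarrow> (if (odd db \<longleftrightarrow> P) then db else db + 1) \<le> (if (odd da \<longleftrightarrow> P) then da else da + 1)"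
proof -
  assume h: "db \<le> da"
  show ?thesis
  proof (cases "db = da")
    case True then show ?thesis by simp
  next
    case False
    then have "db + 1 \<le> da" using h by simp
    moreover have "(if (odd db \<longleftrightarrow> P) then db else db + 1) \<le> db + 1" by simp
    moreover have "da \<le> (if (odd da \<longleftrightarrow> P) then da else da + 1)" by simp
    ultimately show ?thesis by linarith
  qed
qed

lemma infinite_nat_iff_unbounded_le: "infinite (S::nat set) \<longleftrightarrow> (\<forall>m. \<exists>n \<ge> m. n \<in> S)"
proof
  assume "infinite S"
  then show "\<forall>m. \<exists>n \<ge> m. n \<in> S" unfolding finite_nat_set_iff_bounded_le by (meson nat_le_linear)
next
  assume a: "\<forall>m. \<exists>n \<ge> m. n \<in> S"
  show "infinite S"
  proof
    assume "finite S"
    then obtain m where "\<forall>n\<in>S. n \<le> m" unfolding finite_nat_set_iff_bounded_le by blast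
    moreover obtain n where "n \<ge> Suc m" "n \<in> S" using a by blast
    ultimately show False by fastforce
  qed
qed

lemma g_lb: "(d::int) \<le> (if (odd d \<longleftrightarrow> P) then d else d + 1)"
  by simp

lemma g_ub: "(if (odd (d::int) \<longleftrightarrow> P) then d else d + 1) \<le> d + 1"
  by simp

lemma omega_mono:
  assumes t: "tidy a" "tidy b" "is_fix a" "is_fix b" and le: "sqle b a" and cl: "cluster a = cluster b"
  shows "Omega_g b \<le> Omega_g a"
proof (cases "b = a")
  case True then show ?thesis by simp
next
  case False
  then have lt: "sqlt b a" using le sqle_antisym unfolding sqlt_def by blast
  let ?Ua = "{length cs | cs. alt_chain cs \<and> cs \<noteq> [] \<and> hd cs = a}"
  let ?Ub = "{length cs | cs. alt_chain cs \<and> cs \<noteq> [] \<and> hd cs = b}"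
  have fa: "finite ?Ua" "?Ua \<noteq> {}" using U_finite U_one t by blast+
  have fb: "finite ?Ub" using U_finite by blast
  define C where "C = int (cd (cluster a))"
  have Cb: "int (cd (cluster b)) = C" using cl C_def by simp
  show ?thesis
  proof (cases "fix_type b = fix_type a")
    case True
    have "?Ua \<subseteq> ?Ub" using U_same lt True t(2) by blast
    then have "h_up a \<le> h_up b" unfolding h_up_def using Max_mono fa fb by blast
    then have "C - int (h_up b) \<le> C - int (h_up a)" by simp
    then show ?thesis unfolding Omega_g_def Let_def Cb C_def[symmetric] using g_mono True by metis
  next
    case False
    then have du: "fix_type a = dual (fix_type b)" by (cases "fix_type a"; cases "fix_type b") auto
    have "Max ?Ua \<in> ?Ua" using fa Max_in by blast
    then have "Suc (Max ?Ua) \<in> ?Ub" using U_diff lt du t(2) by blast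
    then have "Suc (h_up a) \<le> h_up b" unfolding h_up_def using fb Max_ge by blast
    then have d: "C - int (h_up b) + 1 \<le> C - int (h_up a)" by simp
    have "Omega_g b \<le> C - int (h_up b) + 1" unfolding Omega_g_def Let_def Cb using g_ub by metis
    also have "\<dots> \<le> C - int (h_up a)" using d .
    also have "\<dots> \<le> Omega_g a" unfolding Omega_g_def Let_def C_def using g_lb by metis
    finally show ?thesis .
  qed
qed

lemma omega_parity: "even (Omega_g a) \<longleftrightarrow> fix_type a = Nu"
proof -
  define d where "d = int (cd (cluster a)) - int (h_up a)"
  have "Omega_g a = (if (odd d \<longleftrightarrow> fix_type a = Mu) then d else d + 1)" unfolding Omega_g_def Let_def d_def by simp
  then show ?thesis by (cases "fix_type a") auto
qed

section \<open>The winner of an infinite trace\<close>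

lemma trace_steps: "inf_trace f \<Longrightarrow> step\<^sup>*\<^sup>* (f m) (f (m + k))"
proof (induction k)
  case 0 then show ?case by simp
next
  case (Suc k)
  then have "step (f (m + k)) (f (m + Suc k))" unfolding inf_trace_def by simp
  then show ?case using Suc by (meson rtranclp.rtrancl_into_rtrancl)
qed

lemma fsize_step_nonfix: "step a c \<Longrightarrow> \<not> is_fix a \<Longrightarrow> fsize c < fsize a"
  by (cases a) auto

lemma inf_fix: "inf_trace f \<Longrightarrow> \<exists>m \<ge> n. is_fix (f m)"
proof (rule ccontr)
  assume tr: "inf_trace f" and "\<not> (\<exists>m \<ge> n. is_fix (f m))"
  then have nf: "\<forall>m \<ge> n. \<not> is_fix (f m)" by blast
  have "\<forall>k. fsize (f (n + k)) + k \<le> fsize (f n)"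
  proof
    fix k show "fsize (f (n + k)) + k \<le> fsize (f n)"
    proof (induction k)
      case 0 then show ?case by simp
    next
      case (Suc k)
      have "step (f (n + k)) (f (n + Suc k))" using tr unfolding inf_trace_def by simp
      moreover have "\<not> is_fix (f (n + k))" using nf by simp
      ultimately have "fsize (f (n + Suc k)) < fsize (f (n + k))" using fsize_step_nonfix by blast
      then show ?case using Suc by simp
    qed
  qed
  then have "fsize (f (n + Suc (fsize (f n)))) + Suc (fsize (f n)) \<le> fsize (f n)" by blast
  then show False by simp
qed

lemma occ_step_nonfix: "step t u \<Longrightarrow> \<not> is_fix t \<Longrightarrow> occ a u \<Longrightarrow> occ a t"
  by (cases t) auto

lemma winner_char:
  assumes r: "tidy r" and tr: "inf_trace f" and inC: "\<forall>n. f n \<in> Clos r"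
  shows "\<exists>a. is_fix a \<and> (\<exists>\<^sub>\<infinity>n. f n = a) \<and> (\<forall>b. is_fix b \<and> (\<exists>\<^sub>\<infinity>n. f n = b) \<longrightarrow> sqle b a)
    \<and> winner f = (if fix_type a = Nu then Eloise else Abelard)"
proof -
  define A where "A = {a. is_fix a \<and> (\<exists>\<^sub>\<infinity>n. f n = a)}"
  have finC: "finite (Clos r)" using finite_Clos r by blast
  have AC: "A \<subseteq> Clos r"
  proof
    fix a assume "a \<in> A"
    then have "infinite {n. f n = a}" unfolding A_def using frequently_cofinite by blast
    then obtain n where "f n = a" using not_finite_existsD by blast
    then show "a \<in> Clos r" using inC by blast
  qed
  have finA: "finite A" using AC finC finite_subset by blast
  define V where "V = {u \<in> Clos r. finite {m. f m = u}}"
  have "finite (\<Union>u\<in>V. {m. f m = u})" using finC V_def by auto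
  then obtain N where N: "\<forall>m \<in> (\<Union>u\<in>V. {m. f m = u}). m < N" using finite_nat_set_iff_bounded by blast
  have evinf: "\<And>n. n \<ge> N \<Longrightarrow> infinite {m. f m = f n}"
  proof -
    fix n assume "n \<ge> N"
    then have "f n \<notin> V" using N by fastforce
    then show "infinite {m. f m = f n}" using inC V_def by blast
  qed
  have "infinite {m. is_fix (f m)}"
    using inf_fix[OF tr] unfolding infinite_nat_iff_unbounded_le by blast
  moreover have "{m. is_fix (f m)} \<subseteq> (\<Union>u\<in>{u \<in> Clos r. is_fix u}. {m. f m = u})" using inC by blast
  ultimately have "infinite (\<Union>u\<in>{u \<in> Clos r. is_fix u}. {m. f m = u})" using finite_subset by blast
  then obtain a0 where a0: "a0 \<in> Clos r" "is_fix a0" "infinite {m. f m = a0}" using finC by auto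
  then have a0A: "a0 \<in> A" unfolding A_def using frequently_cofinite by blast
  obtain a where aA: "a \<in> A" and amin: "\<And>c. c \<in> A \<Longrightarrow> fsize a \<le> fsize c"
    using ex_has_least_nat[of "\<lambda>c. c \<in> A" a0 fsize] a0A by blast
  have afix: "is_fix a" and ainf: "infinite {m. f m = a}" using aA unfolding A_def using frequently_cofinite by blast+
  have aC: "a \<in> Clos r" using aA AC by blast
  obtain n0 where n0: "n0 \<ge> N" "f n0 = a"
    using ainf unfolding infinite_nat_iff_unbounded_le by blast
  \<comment> \<open>a never disappears as a free subformula\<close>
  have keep: "\<And>n. n \<ge> N \<Longrightarrow> \<not> occ a (f n) \<Longrightarrow> \<not> occ a (f (Suc n))"
  proof
    fix n assume nN: "n \<ge> N" and no: "\<not> occ a (f n)" and oc: "occ a (f (Suc n))"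
    have st: "step (f n) (f (Suc n))" using tr unfolding inf_trace_def by blast
    show False
    proof (cases "is_fix (f n)")
      case False
      then show False using occ_step_nonfix st oc no by blast
    next
      case True
      then obtain e2 z d where fz: "f n = Fix e2 z d" by (cases "f n") auto
      then have fs: "f (Suc n) = subst d (f n) z" using st by simp
      have fnC: "f n \<in> Clos r" using inC by blast
      have tfn: "tidy (f n)" using tidy_Clos r fnC by blast
      have "BV d \<inter> FV (f n) = {}" using tfn fz unfolding tidy_def by auto
      then have "occ a (f n) \<or> occ a d \<or> occ (f n) a" using occ_subst_cases oc fs by metis
      moreover have "occ a d \<Longrightarrow> occ a (f n)"
      proof -
        assume od: "occ a d"
        have "z \<in> BV r" using steps_BV fnC fz unfolding Clos_def by fastforce
        moreover have "FV a \<subseteq> FV r" using steps_FV aC unfolding Clos_def by blast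
        ultimately have "z \<notin> FV a" using r unfolding tidy_def by blast
        then show "occ a (f n)" using od fz by simp
      qed
      moreover have "occ (f n) a \<Longrightarrow> False"
      proof -
        assume o: "occ (f n) a"
        have "f n \<noteq> a" using no by auto
        then have "fsize (f n) < fsize a" using o occ_fsize occ_size_eq by fastforce
        moreover have "f n \<in> A" using True evinf[OF nN] unfolding A_def using frequently_cofinite by blast
        ultimately show False using amin by fastforce
      qed
      ultimately show False using no by blast
    qed
  qed
  have always: "\<And>k. occ a (f (n0 + k))"
  proof (rule ccontr)
    fix k assume nk: "\<not> occ a (f (n0 + k))"
    have "\<And>j. \<not> occ a (f (n0 + k + j))"
    proof -
      fix j show "\<not> occ a (f (n0 + k + j))"
      proof (induction j)
        case 0 then show ?case using nk by simp
      next
        case (Suc j) then show ?case using keep[of "n0 + k + j"] n0(1) by simp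
      qed
    qed
    moreover obtain m where "m \<ge> n0 + k" "f m = a" using ainf unfolding infinite_nat_iff_unbounded_le by blast
    ultimately show False by (metis le_add_diff_inverse occ_refl)
  qed
  have Rtr: "\<And>k. (\<lambda>u v. step u v \<and> fsub a v)\<^sup>*\<^sup>* (f n0) (f (n0 + k))"
  proof -
    fix k show "(\<lambda>u v. step u v \<and> fsub a v)\<^sup>*\<^sup>* (f n0) (f (n0 + k))"
    proof (induction k)
      case 0 then show ?case by simp
    next
      case (Suc k)
      have "step (f (n0 + k)) (f (n0 + Suc k))" using tr unfolding inf_trace_def by simp
      moreover have "fsub a (f (n0 + Suc k))" using always fsub_occ by blast
      ultimately show ?case using Suc rtranclp.rtrancl_into_rtrancl[of _ "f n0" "f (n0 + k)" "f (n0 + Suc k)"] by blast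
    qed
  qed
  have amax: "\<And>b. b \<in> A \<Longrightarrow> sqle b a \<and> cluster a = cluster b"
  proof -
    fix b assume bA: "b \<in> A"
    then have bf: "is_fix b" and binf: "infinite {m. f m = b}" unfolding A_def using frequently_cofinite by blast+
    obtain m where m: "m \<ge> n0" "f m = b" using binf unfolding infinite_nat_iff_unbounded_le by blast
    have "(\<lambda>u v. step u v \<and> fsub a v)\<^sup>*\<^sup>* a b" using Rtr[of "m - n0"] m n0(2) by simp
    then have sq: "sqle b a" using bf afix unfolding sqle_def trace_within_def by (simp add: fsub_occ)
    obtain m' where m': "m' \<ge> m" "f m' = a" using ainf unfolding infinite_nat_iff_unbounded_le by blast
    have "step\<^sup>*\<^sup>* b a" using trace_steps[OF tr, of m "m' - m"] m m' by simp
    moreover have "step\<^sup>*\<^sup>* a b" using sqle_Clos[OF sq] unfolding Clos_def by blast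
    ultimately have "clos_eq a b" unfolding clos_eq_def by blast
    then have "cluster a = cluster b" unfolding cluster_def clos_eq_def by (auto intro: rtranclp_trans)
    then show "sqle b a \<and> cluster a = cluster b" using sq by blast
  qed
  have "\<forall>w \<in> Omega_g ` A. w \<le> Omega_g a"
  proof
    fix w assume "w \<in> Omega_g ` A"
    then obtain b where b: "b \<in> A" "w = Omega_g b" by blast
    have "tidy b" "tidy a" using b(1) aA AC tidy_Clos r by blast+
    moreover have "is_fix b" using b(1) unfolding A_def by blast
    ultimately show "w \<le> Omega_g a" using omega_mono afix amax[OF b(1)] b(2) by blast
  qed
  then have "Max (Omega_g ` A) = Omega_g a" using finA aA by (intro Max_eqI) auto
  then have "winner f = (if fix_type a = Nu then Eloise else Abelard)"
    unfolding winner_def A_def[symmetric] using omega_parity[of a] by simp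
  moreover have "\<forall>b. is_fix b \<and> (\<exists>\<^sub>\<infinity>n. f n = b) \<longrightarrow> sqle b a" using amax unfolding A_def by blast
  ultimately show ?thesis using afix aA unfolding A_def by blast
qed


context Msub
begin

lemma winner_eq:
  assumes tr: "inf_trace f" and inC: "\<forall>n. f n \<in> Clos b'"
  shows "winner f = winner (\<lambda>n. sig (f n))"
proof -
  have nv: "\<And>n. f n \<noteq> Var y'"
  proof
    fix n assume "f n = Var y'"
    moreover have "step (f n) (f (Suc n))" using tr unfolding inf_trace_def by blast
    ultimately show False by simp
  qed
  have tr2: "inf_trace (\<lambda>n. sig (f n))"
    unfolding inf_trace_def using step_sig Clos_inv inC tr unfolding inf_trace_def by blast
  have inC2: "\<forall>n. sig (f n) \<in> Clos F" using Clos_sig inC by blast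
  obtain a where a: "is_fix a" "\<exists>\<^sub>\<infinity>n. f n = a" "\<forall>b. is_fix b \<and> (\<exists>\<^sub>\<infinity>n. f n = b) \<longrightarrow> sqle b a"
    "winner f = (if fix_type a = Nu then Eloise else Abelard)"
    using winner_char[OF tidy_b' tr inC] by blast
  obtain a2 where a2: "is_fix a2" "\<exists>\<^sub>\<infinity>n. sig (f n) = a2" "\<forall>b. is_fix b \<and> (\<exists>\<^sub>\<infinity>n. sig (f n) = b) \<longrightarrow> sqle b a2"
    "winner (\<lambda>n. sig (f n)) = (if fix_type a2 = Nu then Eloise else Abelard)"
    using winner_char[OF tidyF tr2 inC2] by blast
  have inf2: "infinite {n. sig (f n) = a2}" using a2(2) frequently_cofinite by blast
  then obtain n where n: "sig (f n) = a2" using not_finite_existsD by blast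
  have "{m. sig (f m) = a2} = {m. f m = f n}"
  proof (intro equalityI subsetI)
    fix m assume "m \<in> {m. sig (f m) = a2}"
    then have "sig (f m) = sig (f n)" using n by simp
    then show "m \<in> {m. f m = f n}" using inj_sig inC unfolding inj_on_def by blast
  qed (use n in auto)
  then have infn: "\<exists>\<^sub>\<infinity>m. f m = f n" using inf2 frequently_cofinite by metis
  have fnfix: "is_fix (f n)" using is_fix_sig[OF nv[of n]] n a2(1) by simp
  have le1: "sqle (f n) a" using a(3) infn fnfix by blast
  have aC: "a \<in> Clos b'"
  proof -
    have "infinite {m. f m = a}" using a(2) frequently_cofinite by blast
    then obtain m where "f m = a" using not_finite_existsD by blast
    then show ?thesis using inC by blast
  qed
  have "\<exists>\<^sub>\<infinity>m. sig (f m) = sig a" using a(2) by (rule frequently_elim1) simp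
  moreover have "is_fix (sig a)" using a(1) by (cases a) auto
  ultimately have "sqle (sig a) a2" using a2(3) by blast
  then have "sqle (sig a) (sig (f n))" using n by simp
  then have "sqle a (f n)" using sqle_iff[OF inC[rule_format, of n] fnfix aC a(1)] by blast
  then have "a = f n" using le1 sqle_antisym by blast
  then have "a2 = sig a" using n by simp
  then have "fix_type a2 = fix_type a" using fix_type_sig a(1) by simp
  then show ?thesis using a(4) a2(4) by simp
qed

end

theorem mainTheorem8:
  fixes e :: fp and x x' :: nat and chi :: "'p fml"
  assumes tidy_xi: "tidy (Fix e x chi)"
    and x_free: "x \<in> FV chi"
    and not_clos: "Fix e x chi \<notin> Clos chi"
    and fresh: "x' \<notin> vars (Fix e x chi)"
  shows "tidy (subst chi (Var x') x)
    \<and> bij_betw (\<lambda>phi. subst phi (Fix e x chi) x') (Clos (subst chi (Var x') x)) (Clos (Fix e x chi))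
    \<and> (\<forall>phi \<in> Clos (subst chi (Var x') x). \<forall>psi \<in> Clos (subst chi (Var x') x).
         (phi \<noteq> Var x' \<longrightarrow>
            (step phi psi \<longleftrightarrow> step (subst phi (Fix e x chi) x') (subst psi (Fix e x chi) x'))
            \<and> Ln phi = Ln (subst phi (Fix e x chi) x'))
       \<and> (x' \<in> FV phi \<longrightarrow>
            (fsub phi psi \<longleftrightarrow> fsub (subst phi (Fix e x chi) x') (subst psi (Fix e x chi) x')))
       \<and> (is_fix phi \<and> is_fix psi \<longrightarrow>
            (sqle psi phi \<longleftrightarrow> sqle (subst psi (Fix e x chi) x') (subst phi (Fix e x chi) x')))
       \<and> (is_fix phi \<longrightarrow> h_down phi = h_down (subst phi (Fix e x chi) x')))
    \<and> (\<forall>f. inf_trace f \<and> (\<forall>n. f n \<in> Clos (subst chi (Var x') x)) \<longrightarrow>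
         winner f = winner (\<lambda>n. subst (f n) (Fix e x chi) x'))"
proof -
  interpret M: Msub e x chi x'
    using tidy_xi x_free not_clos fresh by unfold_locales auto
  show ?thesis
    using M.tidy_b' M.bij_sig M.step_iff M.Ln_iff M.fsub_iff M.sqle_iff M.h_down_eq M.winner_eq
    by blast
qed

end
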